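(* Let $\mathbb K=[-1,1]$ and $H(x,p)=v_+(x)(e^{2p}-1)+v_-(x)(e^{-2p}-1)$, where $v_\pm:[-1,1]\to[0,\infty)$ satisfy: $v_-(-1)=0$, $v_-(x)>0$ for $x\ne-1$, $v_+(1)=0$, $v_+(x)>0$ for $x\ne1$; $v_\pm$ extend to $C^2$ functions on an open set containing $[-1,1]$; $v_+'(1)<0$ and $v_-'(-1)>0$. Then $H$ satisfies Condition (H).
   Context: The Lagrangian is $\mathcal L(x,v)=\sup_{p\in\mathbb R}(pv-H(x,p))\in(-\infty,\infty]$. Condition (H) on $H:[-1,1]\times\mathbb R\to\mathbb R$: $H(x,0)=0$ for all $x$, and (H1) $H$ is $C^2$ with $\partial_p^2H>0$ on $[-1,1]\times\mathbb R$ and is the restriction of a $C^2$ function on $(-1-\epsilon,1+\epsilon)\times\mathbb R$ for some $\epsilon>0$. (H2) for every compact $K\subseteq(-1,1)$ there is $\theta_K:[0,\infty)\to[0,\infty)$ with $\theta_K(r)/r\to\infty$ as $r\to\infty$; for every $M\ge0$ a constant $k_M$ with $\theta_K(r+m)\le k_M(1+\theta_K(r))$ for all $m\in[0,M]$, $r\ge0$; constants $c_K,C_K$ with $\mathcal L(x,v)\ge\theta_K(|v|)-c_K$ and $|\partial_x\mathcal L(x,v)|+|\partial_v\mathcal L(x,v)|\le C_K\theta_K(|v|)$ for all $x\in K,v\in\mathbb R$. (H3) for each compact $K\subseteq(-1,1)$, $\lim_{|p|\to\infty}\inf_{x\in K}H(x,p)/|p|=\infty$; moreover $\lim_{p\to\infty}H(-1,p)/p=\infty$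 and $\lim_{p\to-\infty}H(1,p)/(-p)=\infty$. (H4) $\lim_{x\to-1}\operatorname{argmin}_pH(x,p)=-\infty$ and $\lim_{x\to1}\operatorname{argmin}_pH(x,p)=+\infty$. (H5) there are $(y_n^+,q_n^+)\in(-1,1)\times(0,\infty)$ converging to $(1,+\infty)$ with $\partial_pH(y_n^+,q)\ge0$ for $q\ge q_n^+$ and $-\partial_xH(y,q_n^+)\ge0$ for $y\ge y_n^+$, and $(y_n^-,q_n^-)\in(-1,1)\times(-\infty,0)$ converging to $(-1,-\infty)$ with $\partial_pH(y_n^-,q)\le0$ for $q\le q_n^-$ and $-\partial_xH(y,q_n^-)\le0$ for $y\le y_n^-$. *)

theory Defs
  imports "HOL-Analysis.Analysis"
begin

definition Lag :: "(real \<Rightarrow> real \<Rightarrow> real) \<Rightarrow> real \<Rightarrow> real \<Rightarrow> ereal" where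
  "Lag H x v = (SUP p. ereal (p * v - H x p))"

definition C2_1 :: "(real \<Rightarrow> real) \<Rightarrow> real set \<Rightarrow> bool" where
  "C2_1 f U \<longleftrightarrow> (\<exists>f' f''. (\<forall>x\<in>U. (f has_real_derivative f' x) (at x) \<and>
        (f' has_real_derivative f'' x) (at x)) \<and> continuous_on U f'')"

definition C2_2 :: "(real \<Rightarrow> real \<Rightarrow> real) \<Rightarrow> (real \<times> real) set \<Rightarrow> bool" where
  "C2_2 G S \<longleftrightarrow> (\<exists>Gx Gp Gxx Gxp Gpx Gpp.
     (\<forall>z\<in>S. ((\<lambda>(x,p). G x p) has_derivative
          (\<lambda>(h,k). Gx (fst z) (snd z) * h + Gp (fst z) (snd z) * k)) (at z)) \<and>
     (\<forall>z\<in>S. ((\<lambda>(x,p). Gx x p) has_derivative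
          (\<lambda>(h,k). Gxx (fst z) (snd z) * h + Gxp (fst z) (snd z) * k)) (at z)) \<and>
     (\<forall>z\<in>S. ((\<lambda>(x,p). Gp x p) has_derivative
          (\<lambda>(h,k). Gpx (fst z) (snd z) * h + Gpp (fst z) (snd z) * k)) (at z)) \<and>
     continuous_on S (\<lambda>(x,p). Gxx x p) \<and> continuous_on S (\<lambda>(x,p). Gxp x p) \<and>
     continuous_on S (\<lambda>(x,p). Gpx x p) \<and> continuous_on S (\<lambda>(x,p). Gpp x p))"

definition pdx :: "(real \<Rightarrow> real \<Rightarrow> real) \<Rightarrow> real \<Rightarrow> real \<Rightarrow> real" where
  "pdx H x p = (THE D. ((\<lambda>y. H y p) has_real_derivative D) (at x within {-1..1}))"

definition pdp :: "(real \<Rightarrow> real \<Rightarrow> real) \<Rightarrow> real \<Rightarrow> real \<Rightarrow> real" where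
  "pdp H x p = deriv (\<lambda>q. H x q) p"

definition Lag_dx :: "(real \<Rightarrow> real \<Rightarrow> real) \<Rightarrow> real \<Rightarrow> real \<Rightarrow> real \<Rightarrow> bool" where
  "Lag_dx H x v D \<longleftrightarrow> Lag H x v < \<infinity> \<and> (\<forall>\<^sub>F y in at x within {-1..1}. Lag H y v < \<infinity>) \<and>
     ((\<lambda>y. real_of_ereal (Lag H y v)) has_real_derivative D) (at x within {-1..1})"

definition Lag_dv :: "(real \<Rightarrow> real \<Rightarrow> real) \<Rightarrow> real \<Rightarrow> real \<Rightarrow> real \<Rightarrow> bool" where
  "Lag_dv H x v D \<longleftrightarrow> Lag H x v < \<infinity> \<and> (\<forall>\<^sub>F w in at v. Lag H x w < \<infinity>) \<and>
     ((\<lambda>w. real_of_ereal (Lag H x w)) has_real_derivative D) (at v)"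

definition condH0 :: "(real \<Rightarrow> real \<Rightarrow> real) \<Rightarrow> bool" where
  "condH0 H \<longleftrightarrow> (\<forall>x\<in>{-1..1}. H x 0 = 0)"

definition condH1 :: "(real \<Rightarrow> real \<Rightarrow> real) \<Rightarrow> bool" where
  "condH1 H \<longleftrightarrow>
     (\<forall>x\<in>{-1..1}. \<forall>p. deriv (\<lambda>q. deriv (\<lambda>r. H x r) q) p > 0) \<and>
     (\<exists>\<epsilon>>0. \<exists>G. C2_2 G ({-1-\<epsilon><..<1+\<epsilon>} \<times> UNIV) \<and>
        (\<forall>x\<in>{-1..1}. \<forall>p. G x p = H x p))"

definition condH2 :: "(real \<Rightarrow> real \<Rightarrow> real) \<Rightarrow> bool" where
  "condH2 H \<longleftrightarrow> (\<forall>K. compact K \<and> K \<subseteq> {-1<..<1} \<longrightarrow>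
     (\<exists>\<theta>::real\<Rightarrow>real.
        (\<forall>r\<ge>0. \<theta> r \<ge> 0) \<and>
        filterlim (\<lambda>r. \<theta> r / r) at_top at_top \<and>
        (\<forall>M\<ge>0. \<exists>k. \<forall>m\<in>{0..M}. \<forall>r\<ge>0. \<theta> (r + m) \<le> k * (1 + \<theta> r)) \<and>
        (\<exists>c C. \<forall>x\<in>K. \<forall>v.
            Lag H x v \<ge> ereal (\<theta> \<bar>v\<bar> - c) \<and>
            (\<exists>Lx Lv. Lag_dx H x v Lx \<and> Lag_dv H x v Lv \<and> \<bar>Lx\<bar> + \<bar>Lv\<bar> \<le> C * \<theta> \<bar>v\<bar>))))"

definition condH3 :: "(real \<Rightarrow> real \<Rightarrow> real) \<Rightarrow> bool" where
  "condH3 H \<longleftrightarrow>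
     (\<forall>K. compact K \<and> K \<subseteq> {-1<..<1} \<longrightarrow>
        (\<forall>B. \<forall>\<^sub>F p in at_infinity. \<forall>x\<in>K. H x p / \<bar>p\<bar> \<ge> B)) \<and>
     filterlim (\<lambda>p. H (-1) p / p) at_top at_top \<and>
     filterlim (\<lambda>p. H 1 p / (-p)) at_top at_bot"

definition argminH :: "(real \<Rightarrow> real \<Rightarrow> real) \<Rightarrow> real \<Rightarrow> real" where
  "argminH H x = arg_min (H x) (\<lambda>_. True)"

definition condH4 :: "(real \<Rightarrow> real \<Rightarrow> real) \<Rightarrow> bool" where
  "condH4 H \<longleftrightarrow> filterlim (argminH H) at_bot (at_right (-1)) \<and>
                 filterlim (argminH H) at_top (at_left 1)"

definition condH5 :: "(real \<Rightarrow> real \<Rightarrow> real) \<Rightarrow> bool" where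
  "condH5 H \<longleftrightarrow>
    (\<exists>yp qp :: nat \<Rightarrow> real.
       (\<forall>n. yp n \<in> {-1<..<1} \<and> qp n > 0) \<and> yp \<longlonglongrightarrow> 1 \<and> filterlim qp at_top sequentially \<and>
       (\<forall>n. (\<forall>q\<ge>qp n. pdp H (yp n) q \<ge> 0) \<and> (\<forall>y\<in>{yp n..1}. - pdx H y (qp n) \<ge> 0))) \<and>
    (\<exists>ym qm :: nat \<Rightarrow> real.
       (\<forall>n. ym n \<in> {-1<..<1} \<and> qm n < 0) \<and> ym \<longlonglongrightarrow> -1 \<and> filterlim qm at_bot sequentially \<and>
       (\<forall>n. (\<forall>q\<le>qm n. pdp H (ym n) q \<le> 0) \<and> (\<forall>y\<in>{-1..ym n}. - pdx H y (qm n) \<le> 0)))"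

definition condH :: "(real \<Rightarrow> real \<Rightarrow> real) \<Rightarrow> bool" where
  "condH H \<longleftrightarrow> condH0 H \<and> condH1 H \<and> condH2 H \<and> condH3 H \<and> condH4 H \<and> condH5 H"

end

theory Submission
  imports Defs
begin

definition Yf :: "real \<Rightarrow> real \<Rightarrow> real \<Rightarrow> real" where
  "Yf a b v = (v + sqrt (v^2 + 16*a*b)) / (4*a)"

definition Lf :: "real \<Rightarrow> real \<Rightarrow> real \<Rightarrow> real" where
  "Lf a b v = ln (Yf a b v) / 2 * v - a * (Yf a b v - 1) - b * (1 / Yf a b v - 1)"

lemma sqrt_gt_abs: assumes "a > 0" "b > 0" shows "sqrt (v^2 + 16*a*b) > \<bar>v\<bar>"
proof -
  have "sqrt (v^2) < sqrt (v^2 + 16*a*b)" using assms by (intro real_sqrt_less_mono) simp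
  thus ?thesis by simp
qed

lemma Yf_pos: assumes "a > 0" "b > 0" shows "Yf a b v > 0"
  using sqrt_gt_abs[OF assms, of v] assms unfolding Yf_def by (intro divide_pos_pos) auto

lemma Yf_eq: assumes "a > 0" "b > 0" shows "2*a*Yf a b v - 2*b / Yf a b v = v"
proof -
  define s where "s = sqrt (v^2 + 16*a*b)"
  have s2: "s^2 = v^2 + 16*a*b" unfolding s_def using assms by (simp add: add_nonneg_nonneg)
  have vs: "v + s > 0" using sqrt_gt_abs[OF assms, of v] unfolding s_def by linarith
  have Y: "Yf a b v = (v+s)/(4*a)" unfolding Yf_def s_def ..
  have k: "(v+s)*(v+s) - 16*a*b = 2 * v * (v+s)" using s2 by (simp add: algebra_simps power2_eq_square)
  have e1: "2*a*((v+s)/(4*a)) = (v+s)/2" using assms by simp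
  have e2: "2*b/((v+s)/(4*a)) = 8*a*b/(v+s)" using assms vs by (simp add: field_simps)
  have e3: "(v+s)/2 - 8*a*b/(v+s) = ((v+s)*(v+s) - 16*a*b)/(2*(v+s))"
    using vs by (simp add: field_simps)
  have "2*a*((v+s)/(4*a)) - 2*b/((v+s)/(4*a)) = ((v+s)*(v+s) - 16*a*b)/(2*(v+s))"
    unfolding e1 e2 e3 ..
  also have "\<dots> = v" using vs k by (simp add: field_simps)
  finally show ?thesis using Y by simp
qed

lemma Yf_inv: assumes "a > 0" "b > 0" shows "1 / Yf a b v = (sqrt (v^2 + 16*a*b) - v) / (4*b)"
proof -
  define s where "s = sqrt (v^2 + 16*a*b)"
  have s2: "s^2 = v^2 + 16*a*b" unfolding s_def using assms by (simp add: add_nonneg_nonneg)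
  have vs: "v + s > 0" using sqrt_gt_abs[OF assms, of v] unfolding s_def by linarith
  have "4*a/(v+s) = (s - v)/(4*b)" using vs assms s2 by (simp add: field_simps power2_eq_square)
  thus ?thesis unfolding Yf_def s_def[symmetric] by simp
qed

lemma Lf_max: fixes p :: real assumes "a > 0" "b > 0"
  shows "p * v - (a*(exp (2*p) - 1) + b*(exp (- 2*p) - 1)) \<le> Lf a b v"
proof -
  define Y where "Y = Yf a b v"
  define P where "P = ln Y / 2"
  have Yp: "Y > 0" using Yf_pos[OF assms] Y_def by simp
  have e1: "exp (2*P) = Y" using Yp unfolding P_def by simp
  have e2: "exp (-2*P) = 1/Y" using Yp unfolding P_def by (simp add: exp_minus exp_ln field_simps)
  have eq: "2*a*Y - 2*b/Y = v" using Yf_eq[OF assms] Y_def by simp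
  define t where "t = p - P"
  have x1: "exp (2*p) = Y * exp (2*t)" unfolding t_def e1[symmetric] by (simp add: mult_exp_exp algebra_simps)
  have x2: "exp (-2*p) = (1/Y) * exp (-2*t)" unfolding t_def e2[symmetric] by (simp add: mult_exp_exp algebra_simps)
  have i1: "a*exp (2*p) \<ge> a*Y*(1+2*t)"
    using x1 exp_ge_add_one_self[of "2*t"] assms Yp by (simp add: mult_left_mono)
  have i2: "b*exp (-2*p) \<ge> b*(1/Y)*(1-2*t)"
    using x2 exp_ge_add_one_self[of "-2*t"] assms Yp by (simp, intro divide_right_mono mult_left_mono) auto
  have "p * v - (a*(exp (2*p) - 1) + b*(exp (- 2*p) - 1)) \<le> p * v - a*Y*(1+2*t) - b*(1/Y)*(1-2*t) + a + b"
    using i1 i2 by (simp add: algebra_simps)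
  also have "\<dots> = p * v - a*Y - b/Y + a + b - t*(2*a*Y - 2*b/Y)" by (simp add: algebra_simps)
  also have "\<dots> = P * v - a*Y - b/Y + a + b" unfolding eq t_def by (simp add: algebra_simps)
  also have "\<dots> = Lf a b v" unfolding Lf_def Y_def[symmetric] P_def by (simp add: algebra_simps)
  finally show ?thesis .
qed

lemma Lf_attained: assumes "a > 0" "b > 0"
  shows "Lf a b v = (ln (Yf a b v)/2) * v - (a*(exp (2*(ln (Yf a b v)/2)) - 1) + b*(exp (- 2*(ln (Yf a b v)/2)) - 1))"
  using Yf_pos[OF assms, of v] unfolding Lf_def by (simp add: exp_minus field_simps)

lemma Lag_eq: assumes "a > 0" "b > 0"
  shows "(SUP p. ereal (p * v - (a*(exp (2*p) - 1) + b*(exp (- 2*p) - 1)))) = ereal (Lf a b v)"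
proof (rule antisym)
  show "(SUP p. ereal (p * v - (a*(exp (2*p) - 1) + b*(exp (- 2*p) - 1)))) \<le> ereal (Lf a b v)"
    using Lf_max[OF assms] by (intro SUP_least) simp
  show "ereal (Lf a b v) \<le> (SUP p. ereal (p * v - (a*(exp (2*p) - 1) + b*(exp (- 2*p) - 1))))"
    by (rule SUP_upper2[where i="ln (Yf a b v)/2"]) (use Lf_attained[OF assms] in simp_all)
qed

lemma Lf_deriv:
  assumes dA: "(A has_real_derivative A') (at t)" and dB: "(B has_real_derivative B') (at t)"
    and dV: "(V has_real_derivative V') (at t)" and pA: "A t > 0" and pB: "B t > 0"
  shows "((\<lambda>t. Lf (A t) (B t) (V t)) has_real_derivative
     (ln (Yf (A t) (B t) (V t))/2 * V' - A' * (Yf (A t) (B t) (V t) - 1)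
        - B' * (1 / Yf (A t) (B t) (V t) - 1))) (at t)"
proof -
  define Y where "Y = (\<lambda>t. Yf (A t) (B t) (V t))"
  have S: "0 < (V t)^2 + 16*A t*B t" using pA pB by (simp add: add_nonneg_pos)
  have "\<exists>D. (Y has_real_derivative D) (at t)"
    unfolding Y_def Yf_def
    apply (rule exI)
    apply (rule DERIV_real_sqrt[THEN DERIV_chain2] derivative_eq_intros dA dB dV refl S)+
    using pA apply simp
    by (rule refl)
  then obtain Y' where dY: "(Y has_real_derivative Y') (at t)" by blast
  have Yp: "Y t > 0" unfolding Y_def using Yf_pos[OF pA pB] .
  have Yne: "Y t \<noteq> 0" using Yp by simp
  have eq: "2*A t*Y t - 2*B t/Y t = V t" unfolding Y_def using Yf_eq[OF pA pB] .
  have D: "((\<lambda>t. ln (Y t) / 2 * V t - A t * (Y t - 1) - B t * (1 / Y t - 1)) has_real_derivative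
     (Y' / Y t / 2 * V t + ln (Y t)/2 * V' - (A' * (Y t - 1) + A t * Y') - (B' * (1 / Y t - 1) + B t * (- Y' / (Y t)^2)))) (at t)"
    using Yp by (auto intro!: derivative_eq_intros dY dA dB dV simp: power2_eq_square field_simps)
  have E: "Y' / Y t / 2 * V t + ln (Y t)/2 * V' - (A' * (Y t - 1) + A t * Y') - (B' * (1 / Y t - 1) + B t * (- Y' / (Y t)^2))
     = ln (Y t)/2 * V' - A' * (Y t - 1) - B' * (1 / Y t - 1)"
  proof -
    have "Y' / Y t / 2 * V t - A t * Y' + B t * Y' / (Y t)^2 = Y' * (V t / (2 * Y t) - A t + B t / (Y t)^2)"
      by (simp add: algebra_simps)
    also have "V t / (2 * Y t) - A t + B t / (Y t)^2 = 0"
      unfolding eq[symmetric] using Yp by (simp add: field_simps power2_eq_square)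
    finally show ?thesis by (simp add: algebra_simps)
  qed
  show ?thesis using D[unfolded E] unfolding Y_def Lf_def by simp
qed

definition th0 :: "real \<Rightarrow> real" where "th0 r = (1 + r) * (1 + ln (1 + r)) / 4"

lemma th0_ge: assumes "r \<ge> 0" shows "th0 r \<ge> (1 + r) / 4"
proof -
  have "ln (1+r) \<ge> 0" using assms by simp
  hence "(1 + r) * 1 \<le> (1 + r) * (1 + ln (1 + r))" using assms by (intro mult_left_mono) auto
  thus ?thesis unfolding th0_def by simp
qed

lemma th0_nonneg: "r \<ge> 0 \<Longrightarrow> th0 r \<ge> 0"
  using th0_ge[of r] by simp

lemma th0_lim: "filterlim (\<lambda>r. th0 r / r) at_top at_top"
proof (subst filterlim_at_top, intro allI)
  fix Z :: real
  show "\<forall>\<^sub>F r in at_top. Z \<le> th0 r / r"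
  proof (rule eventually_at_top_linorder[THEN iffD2], intro exI allI impI)
    fix r assume r: "r \<ge> exp (4 * \<bar>Z\<bar>)"
    have rp: "r > 0" using r by (smt (verit) exp_gt_zero)
    have "4 * \<bar>Z\<bar> \<le> ln r" using r rp by (metis exp_le_cancel_iff exp_ln)
    also have "\<dots> \<le> ln (1 + r)" using rp by simp
    finally have z: "Z \<le> ln (1 + r) / 4" by simp
    have "ln (1 + r) / 4 \<le> th0 r / r"
    proof -
      have "ln (1+r) \<ge> 0" using rp by simp
      hence "r * ln (1 + r) \<le> (1 + r) * (1 + ln (1 + r))" using rp
        by (simp add: ring_distribs)
      thus ?thesis unfolding th0_def using rp by (simp add: field_simps)
    qed
    with z show "Z \<le> th0 r / r" by (rule order_trans)
  qed
qed

lemma th0_doubling: assumes "M \<ge> 0"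
  shows "\<exists>k. \<forall>m\<in>{0..M}. \<forall>r\<ge>0. th0 (r + m) \<le> k * (1 + th0 r)"
proof (intro exI ballI allI impI)
  fix m r :: real assume m: "m \<in> {0..M}" and r: "r \<ge> 0"
  have "M * r \<ge> 0" using assms r by simp
  moreover have "(1 + M) * (1 + r) = 1 + r + M + M * r" by (simp add: algebra_simps)
  moreover have "m \<le> M" using m by simp
  ultimately have l1: "1 + (r + m) \<le> (1 + M) * (1 + r)" by linarith
  have l2: "ln (1 + (r + m)) \<le> ln (1 + M) + ln (1 + r)"
  proof -
    have "ln (1 + (r + m)) \<le> ln ((1 + M) * (1 + r))" using l1 m r by (subst ln_le_cancel_iff) auto
    also have "\<dots> = ln (1 + M) + ln (1 + r)" using assms r by (simp add: ln_mult)
    finally show ?thesis .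
  qed
  have lM: "ln (1 + M) \<ge> 0" and lr: "ln (1 + r) \<ge> 0" using assms r by auto
  have "ln (1 + M) * ln (1 + r) \<ge> 0" using lM lr by simp
  moreover have "(1 + ln (1 + M)) * (1 + ln (1 + r)) = 1 + ln (1 + M) + ln (1 + r) + ln (1 + M) * ln (1 + r)"
    by (simp add: algebra_simps)
  ultimately have l3: "1 + ln (1 + (r + m)) \<le> (1 + ln (1 + M)) * (1 + ln (1 + r))"
    using l2 by linarith
  have "th0 (r + m) = (1 + (r + m)) * (1 + ln (1 + (r + m))) / 4" unfolding th0_def ..
  also have "\<dots> \<le> ((1 + M) * (1 + r)) * ((1 + ln (1 + M)) * (1 + ln (1 + r))) / 4"
    using l1 l3 m r lr by (intro divide_right_mono mult_mono) auto
  also have "\<dots> = ((1 + M) * (1 + ln (1 + M))) * th0 r" unfolding th0_def by (simp add: algebra_simps)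
  also have "\<dots> \<le> ((1 + M) * (1 + ln (1 + M))) * (1 + th0 r)"
    using assms lM by (intro mult_left_mono) auto
  finally show "th0 (r + m) \<le> ((1 + M) * (1 + ln (1 + M))) * (1 + th0 r)" .
qed

lemma Lf_lower:
  assumes a: "0 < a" "a \<le> M" and b: "0 < b" "b \<le> M"
  shows "Lf a b v \<ge> th0 \<bar>v\<bar> - (M + 1 + (M + 1) * exp (4 * M + 2))"
proof -
  define r where "r = \<bar>v\<bar>"
  define l where "l = ln (1 + r)"
  have r0: "r \<ge> 0" unfolding r_def by simp
  have l0: "l \<ge> 0" unfolding l_def using r0 by simp
  have M0: "M \<ge> 0" using a by simp
  have e1: "exp l = 1 + r" unfolding l_def using r0 by simp
  have step1: "Lf a b v \<ge> r * l / 2 - M * r"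
  proof (cases "v \<ge> 0")
    case True
    have ex1: "exp (2 * (l/2)) = 1 + r" using e1 by simp
    have ex2: "exp (- 2 * (l/2)) = 1 / (1 + r)" using e1 by (simp add: exp_minus field_simps)
    have "b * (1 / (1 + r) - 1) \<le> 0" using b r0 by (simp add: mult_nonneg_nonpos)
    moreover have "a * r \<le> M * r" using a r0 by (simp add: mult_right_mono)
    moreover have "v = r" using True r_def by simp
    ultimately have "r * l / 2 - M * r \<le> (l/2) * v - (a * (exp (2 * (l/2)) - 1) + b * (exp (- 2 * (l/2)) - 1))"
      unfolding ex1 ex2 by (simp add: algebra_simps)
    also have "\<dots> \<le> Lf a b v" by (rule Lf_max[OF a(1) b(1)])
    finally show ?thesis .
  next
    case False
    have ex1: "exp (2 * (-l/2)) = 1 / (1 + r)" using e1 by (simp add: exp_minus field_simps)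
    have ex2: "exp (- 2 * (-l/2)) = 1 + r" using e1 by simp
    have "a * (1 / (1 + r) - 1) \<le> 0" using a r0 by (simp add: mult_nonneg_nonpos)
    moreover have "b * r \<le> M * r" using b r0 by (simp add: mult_right_mono)
    moreover have "v = - r" using False r_def by simp
    ultimately have "r * l / 2 - M * r \<le> (-l/2) * v - (a * (exp (2 * (-l/2)) - 1) + b * (exp (- 2 * (-l/2)) - 1))"
      unfolding ex1 ex2 by (simp add: algebra_simps)
    also have "\<dots> \<le> Lf a b v" by (rule Lf_max[OF a(1) b(1)])
    finally show ?thesis .
  qed
  have step2: "r * l / 2 - M * r \<ge> th0 r - (M + 1 + (M + 1) * exp (4 * M + 2))"
  proof (cases "l \<ge> 4 * M + 2")
    case True
    have "exp l \<ge> exp 2" using True M0 by simp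
    moreover have "exp (2::real) \<ge> 1 + 2" by (rule exp_ge_add_one_self)
    ultimately have r1: "r \<ge> 1" using e1 by simp
    have h1: "(r - 1) * (4 * M + 2) \<le> (r - 1) * l" using r1 True by (intro mult_left_mono) auto
    have T: "th0 r = (1 + r) * (1 + l) / 4" unfolding th0_def l_def ..
    have h2: "(r - 1) * (4 * M + 2) = 4 * (M * r) + 2 * r - 4 * M - 2" by (simp add: algebra_simps)
    have h3: "(r - 1) * l = r * l - l" by (simp add: algebra_simps)
    have h4: "(1 + r) * (1 + l) = 1 + r + l + r * l" by (simp add: algebra_simps)
    have kn: "(M + 1) * exp (4 * M + 2) \<ge> 0" using M0 by simp
    show ?thesis unfolding T using r0 h1 h2 h3 h4 kn by argo
  next
    case False
    have "1 + r \<le> exp (4 * M + 2)" using False e1 by (metis exp_le_cancel_iff less_eq_real_def not_le)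
    hence r2: "r \<le> exp (4 * M + 2)" by simp
    have "(M + 1/4) * r \<le> (M + 1) * r" using r0 by (intro mult_right_mono) auto
    also have "\<dots> \<le> (M + 1) * exp (4 * M + 2)" using r2 M0 by (intro mult_left_mono) auto
    finally have g1: "(M + 1/4) * r \<le> (M + 1) * exp (4 * M + 2)" .
    have g2: "r * l \<ge> 0" using r0 l0 by simp
    have T: "th0 r = (1 + r) * (1 + l) / 4" unfolding th0_def l_def ..
    have h4: "(1 + r) * (1 + l) = 1 + r + l + r * l" by (simp add: algebra_simps)
    have h5: "(M + 1/4) * r = M * r + r / 4" by (simp add: algebra_simps)
    show ?thesis unfolding T using M0 False g1 g2 h4 h5 by argo
  qed
  show ?thesis using step1 step2 r_def by simp
qed

lemma deriv2:
  assumes dA: "(A has_real_derivative A') (at x)" and dB: "(B has_real_derivative B') (at x)"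
    and dC: "(C has_real_derivative C') (at p)" and dD: "(D has_real_derivative D') (at p)"
  shows "((\<lambda>(x,p). A x * C p + B x * D p) has_derivative
           (\<lambda>(h,k). (A' * C p + B' * D p) * h + (A x * C' + B x * D') * k)) (at (x,p))"
proof -
  have f1: "((\<lambda>z. fst z) has_derivative (\<lambda>h. fst h)) (at (x,p))"
    by (rule has_derivative_fst[OF has_derivative_ident])
  have f2: "((\<lambda>z. snd z) has_derivative (\<lambda>h. snd h)) (at (x,p))"
    by (rule has_derivative_snd[OF has_derivative_ident])
  have gA: "((\<lambda>z. A (fst z)) has_derivative (\<lambda>h. A' * fst h)) (at (x,p))"
    using has_derivative_compose[OF f1, of A "(*) A'"] dA
    by (simp add: has_field_derivative_def)
  have gB: "((\<lambda>z. B (fst z)) has_derivative (\<lambda>h. B' * fst h)) (at (x,p))"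
    using has_derivative_compose[OF f1, of B "(*) B'"] dB
    by (simp add: has_field_derivative_def)
  have gC: "((\<lambda>z. C (snd z)) has_derivative (\<lambda>h. C' * snd h)) (at (x,p))"
    using has_derivative_compose[OF f2, of C "(*) C'"] dC
    by (simp add: has_field_derivative_def)
  have gD: "((\<lambda>z. D (snd z)) has_derivative (\<lambda>h. D' * snd h)) (at (x,p))"
    using has_derivative_compose[OF f2, of D "(*) D'"] dD
    by (simp add: has_field_derivative_def)
  have G: "((\<lambda>z. A (fst z) * C (snd z) + B (fst z) * D (snd z)) has_derivative
     (\<lambda>h. (A (fst (x,p)) * (C' * snd h) + A' * fst h * C (snd (x,p))) +
          (B (fst (x,p)) * (D' * snd h) + B' * fst h * D (snd (x,p))))) (at (x,p))"
    by (intro has_derivative_add has_derivative_mult gA gB gC gD)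
  have e1: "(\<lambda>(x,p). A x * C p + B x * D p) = (\<lambda>z. A (fst z) * C (snd z) + B (fst z) * D (snd z))"
    by (auto simp: fun_eq_iff)
  show ?thesis unfolding e1
    by (rule has_derivative_eq_rhs[OF G]) (auto simp: fun_eq_iff algebra_simps)
qed

lemma cont2:
  fixes A B C D :: "real \<Rightarrow> real" and W :: "real set"
  assumes "continuous_on W A" "continuous_on W B" "continuous_on UNIV C" "continuous_on UNIV D"
  shows "continuous_on (W \<times> UNIV) (\<lambda>(x,p). A x * C p + B x * D p)"
proof -
  have cf: "continuous_on (W \<times> UNIV) (\<lambda>z::real\<times>real. fst z)" by (rule continuous_on_fst[OF continuous_on_id])
  have cs: "continuous_on (W \<times> UNIV) (\<lambda>z::real\<times>real. snd z)" by (rule continuous_on_snd[OF continuous_on_id])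
  have a: "continuous_on (W \<times> UNIV) (\<lambda>z::real\<times>real. A (fst z))" using assms(1) by (auto intro!: continuous_on_compose2[of W A] continuous_intros)
  have b: "continuous_on (W \<times> UNIV) (\<lambda>z::real\<times>real. B (fst z))" using assms(2) by (auto intro!: continuous_on_compose2[of W B] continuous_intros)
  have c: "continuous_on (W \<times> UNIV) (\<lambda>z::real\<times>real. C (snd z))" using assms(3) by (auto intro!: continuous_on_compose2[of UNIV C] continuous_intros)
  have d: "continuous_on (W \<times> UNIV) (\<lambda>z::real\<times>real. D (snd z))" using assms(4) by (auto intro!: continuous_on_compose2[of UNIV D] continuous_intros)
  have "continuous_on (W \<times> UNIV) (\<lambda>z. A (fst z) * C (snd z) + B (fst z) * D (snd z))"
    by (intro continuous_on_add continuous_on_mult a b c d)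
  moreover have "(\<lambda>(x,p). A x * C p + B x * D p) = (\<lambda>z. A (fst z) * C (snd z) + B (fst z) * D (snd z))"
    by (auto simp: fun_eq_iff)
  ultimately show ?thesis by simp
qed

lemma dHp: fixes a b q :: real shows "((\<lambda>r. a * (exp (2 * r) - 1) + b * (exp (- 2 * r) - 1)) has_real_derivative
   (2 * a * exp (2 * q) - 2 * b * exp (- 2 * q))) (at q)"
  by (auto intro!: derivative_eq_intros)

lemma deriv_Hp: fixes a b :: real shows "deriv (\<lambda>r. a * (exp (2 * r) - 1) + b * (exp (- 2 * r) - 1)) =
   (\<lambda>q. 2 * a * exp (2 * q) - 2 * b * exp (- 2 * q))"
  by (rule ext, rule DERIV_imp_deriv, rule dHp)

lemma deriv_Hpp: fixes a b p :: real shows "deriv (\<lambda>q. 2 * a * exp (2 * q) - 2 * b * exp (- 2 * q)) p =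
   4 * a * exp (2 * p) + 4 * b * exp (- 2 * p)"
  by (rule DERIV_imp_deriv) (auto intro!: derivative_eq_intros)

locale LA =
  fixes vp vm f1 f2 g1 g2 :: "real \<Rightarrow> real" and U :: "real set"
  assumes U: "open U" "{-1..1} \<subseteq> U"
    and dvp: "\<And>x. x \<in> U \<Longrightarrow> (vp has_real_derivative f1 x) (at x)"
    and df1: "\<And>x. x \<in> U \<Longrightarrow> (f1 has_real_derivative f2 x) (at x)"
    and cf2: "continuous_on U f2"
    and dvm: "\<And>x. x \<in> U \<Longrightarrow> (vm has_real_derivative g1 x) (at x)"
    and dg1: "\<And>x. x \<in> U \<Longrightarrow> (g1 has_real_derivative g2 x) (at x)"
    and cg2: "continuous_on U g2"
    and vm_zero: "vm (-1) = 0" and vp_zero: "vp 1 = 0"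
    and pos_in: "\<And>x. x \<in> {-1<..<1} \<Longrightarrow> vp x > 0 \<and> vm x > 0"
    and vp_m1: "vp (-1) > 0" and vm_1: "vm 1 > 0"
    and f1_1: "f1 1 < 0" and g1_m1: "g1 (-1) > 0"
begin

lemma cvp: "continuous_on U vp"
  by (rule continuous_at_imp_continuous_on) (auto intro: DERIV_isCont dvp)
lemma cvm: "continuous_on U vm"
  by (rule continuous_at_imp_continuous_on) (auto intro: DERIV_isCont dvm)
lemma cf1: "continuous_on U f1"
  by (rule continuous_at_imp_continuous_on) (auto intro: DERIV_isCont df1)
lemma cg1: "continuous_on U g1"
  by (rule continuous_at_imp_continuous_on) (auto intro: DERIV_isCont dg1)

lemma nn: assumes "x \<in> {-1..1}" shows "vp x \<ge> 0" "vm x \<ge> 0" "vp x + vm x > 0"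
proof -
  have "(vp x \<ge> 0 \<and> vm x \<ge> 0) \<and> vp x + vm x > 0"
  proof (cases "x = -1")
    case True thus ?thesis using vp_m1 vm_zero by simp
  next
    case False note F = this
    show ?thesis
    proof (cases "x = 1")
      case True thus ?thesis using vm_1 vp_zero by simp
    next
      case False
      hence "x \<in> {-1<..<1}" using F assms by auto
      thus ?thesis using pos_in[of x] by simp
    qed
  qed
  thus "vp x \<ge> 0" "vm x \<ge> 0" "vp x + vm x > 0" by auto
qed

lemma H0: "condH0 (\<lambda>x p. vp x * (exp (2 * p) - 1) + vm x * (exp (- 2 * p) - 1))"
  unfolding condH0_def by simp

lemma eps: "\<exists>\<epsilon>>0. {-1-\<epsilon><..<1+\<epsilon>} \<subseteq> U"
proof -
  have m1: "-1 \<in> U" and p1: "1 \<in> U" using U(2) by auto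
  obtain e1 where e1: "e1 > 0" "ball (-1) e1 \<subseteq> U" using openE[OF U(1) m1] by blast
  obtain e2 where e2: "e2 > 0" "ball 1 e2 \<subseteq> U" using openE[OF U(1) p1] by blast
  define e where "e = min e1 e2"
  have ee: "e > 0" "e \<le> e1" "e \<le> e2" unfolding e_def using e1 e2 by auto
  have "{-1-e<..<1+e} \<subseteq> U"
  proof
    fix y assume y: "y \<in> {-1 - e<..<1 + e}"
    hence y1: "-1 - e < y" "y < 1 + e" by auto
    show "y \<in> U"
    proof (cases "y < -1")
      case True
      hence "dist y (-1) < e1" unfolding dist_real_def using y1 ee by linarith
      hence "y \<in> ball (-1) e1" by (simp add: dist_commute)
      thus ?thesis using e1 by blast
    next
      case F: False
      show ?thesis
      proof (cases "y > 1")
        case True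
        hence "dist y 1 < e2" unfolding dist_real_def using y1 ee by linarith
        hence "y \<in> ball 1 e2" by (simp add: dist_commute)
        thus ?thesis using e2 by blast
      next
        case False
        hence "y \<in> {-1..1}" using F by simp
        thus ?thesis using U by blast
      qed
    qed
  qed
  thus ?thesis using ee by blast
qed

lemma H1: "condH1 (\<lambda>x p. vp x * (exp (2 * p) - 1) + vm x * (exp (- 2 * p) - 1))"
  unfolding condH1_def
proof (intro conjI ballI allI)
  fix x p :: real assume x: "x \<in> {-1..1}"
  have "4 * vp x * exp (2 * p) + 4 * vm x * exp (- 2 * p) > 0"
  proof (cases "vp x > 0")
    case True thus ?thesis using nn[OF x] by (simp add: add_pos_nonneg)
  next
    case False hence "vm x > 0" using nn[OF x] by linarith
    thus ?thesis using nn[OF x] by (simp add: add_nonneg_pos)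
  qed
  thus "0 < deriv (\<lambda>q. deriv (\<lambda>r. vp x * (exp (2 * r) - 1) + vm x * (exp (- 2 * r) - 1)) q) p"
    unfolding deriv_Hp deriv_Hpp .
next
  obtain \<epsilon> where e: "\<epsilon> > 0" "{-1-\<epsilon><..<1+\<epsilon>} \<subseteq> U" using eps by blast
  define W where "W = {-1-\<epsilon><..<1+\<epsilon>}"
  have dC: "((\<lambda>p. exp (2 * p) - 1) has_real_derivative 2 * exp (2 * p)) (at p)" for p :: real
    by (auto intro!: derivative_eq_intros)
  have dD: "((\<lambda>p. exp (- 2 * p) - 1) has_real_derivative - 2 * exp (- 2 * p)) (at p)" for p :: real
    by (auto intro!: derivative_eq_intros)
  have dC2: "((\<lambda>p. 2 * exp (2 * p)) has_real_derivative 4 * exp (2 * p)) (at p)" for p :: real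
    by (auto intro!: derivative_eq_intros)
  have dD2: "((\<lambda>p. - 2 * exp (- 2 * p)) has_real_derivative 4 * exp (- 2 * p)) (at p)" for p :: real
    by (auto intro!: derivative_eq_intros)
  have cC: "continuous_on UNIV (\<lambda>p::real. exp (2 * p) - 1)" by (intro continuous_intros)
  have cD: "continuous_on UNIV (\<lambda>p::real. exp (- 2 * p) - 1)" by (intro continuous_intros)
  have cC2: "continuous_on UNIV (\<lambda>p::real. 2 * exp (2 * p))" by (intro continuous_intros)
  have cD2: "continuous_on UNIV (\<lambda>p::real. - 2 * exp (- 2 * p))" by (intro continuous_intros)
  have cC4: "continuous_on UNIV (\<lambda>p::real. 4 * exp (2 * p))" by (intro continuous_intros)
  have cD4: "continuous_on UNIV (\<lambda>p::real. 4 * exp (- 2 * p))" by (intro continuous_intros)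
  have WU: "W \<subseteq> U" using e W_def by simp
  have C2: "C2_2 (\<lambda>x p. vp x * (exp (2 * p) - 1) + vm x * (exp (- 2 * p) - 1)) (W \<times> UNIV)"
    unfolding C2_2_def
  proof (rule exI[of _ "\<lambda>x p. f1 x * (exp (2 * p) - 1) + g1 x * (exp (- 2 * p) - 1)"],
      rule exI[of _ "\<lambda>x p. vp x * (2 * exp (2 * p)) + vm x * (- 2 * exp (- 2 * p))"],
      rule exI[of _ "\<lambda>x p. f2 x * (exp (2 * p) - 1) + g2 x * (exp (- 2 * p) - 1)"],
      rule exI[of _ "\<lambda>x p. f1 x * (2 * exp (2 * p)) + g1 x * (- 2 * exp (- 2 * p))"],
      rule exI[of _ "\<lambda>x p. f1 x * (2 * exp (2 * p)) + g1 x * (- 2 * exp (- 2 * p))"],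
      rule exI[of _ "\<lambda>x p. vp x * (4 * exp (2 * p)) + vm x * (4 * exp (- 2 * p))"] , intro conjI ballI)
    fix z assume z: "z \<in> W \<times> (UNIV::real set)"
    obtain x p where zxp: "z = (x, p)" by (cases z)
    have xU: "x \<in> U" using z zxp WU by auto
    show "((\<lambda>(x, p). vp x * (exp (2 * p) - 1) + vm x * (exp (- 2 * p) - 1)) has_derivative
        (\<lambda>(h, k). (f1 (fst z) * (exp (2 * snd z) - 1) + g1 (fst z) * (exp (- 2 * snd z) - 1)) * h +
                  (vp (fst z) * (2 * exp (2 * snd z)) + vm (fst z) * (- 2 * exp (- 2 * snd z))) * k)) (at z)"
      unfolding zxp fst_conv snd_conv by (rule deriv2[OF dvp[OF xU] dvm[OF xU] dC dD])
    show "((\<lambda>(x, p). f1 x * (exp (2 * p) - 1) + g1 x * (exp (- 2 * p) - 1)) has_derivative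
        (\<lambda>(h, k). (f2 (fst z) * (exp (2 * snd z) - 1) + g2 (fst z) * (exp (- 2 * snd z) - 1)) * h +
                  (f1 (fst z) * (2 * exp (2 * snd z)) + g1 (fst z) * (- 2 * exp (- 2 * snd z))) * k)) (at z)"
      unfolding zxp fst_conv snd_conv by (rule deriv2[OF df1[OF xU] dg1[OF xU] dC dD])
    show "((\<lambda>(x, p). vp x * (2 * exp (2 * p)) + vm x * (- 2 * exp (- 2 * p))) has_derivative
        (\<lambda>(h, k). (f1 (fst z) * (2 * exp (2 * snd z)) + g1 (fst z) * (- 2 * exp (- 2 * snd z))) * h +
                  (vp (fst z) * (4 * exp (2 * snd z)) + vm (fst z) * (4 * exp (- 2 * snd z))) * k)) (at z)"
      unfolding zxp fst_conv snd_conv by (rule deriv2[OF dvp[OF xU] dvm[OF xU] dC2 dD2])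
  next
    show "continuous_on (W \<times> UNIV) (\<lambda>(x, p). f2 x * (exp (2 * p) - 1) + g2 x * (exp (- 2 * p) - 1))"
      by (rule cont2[OF continuous_on_subset[OF cf2 WU] continuous_on_subset[OF cg2 WU] cC cD])
    show "continuous_on (W \<times> UNIV) (\<lambda>(x, p). f1 x * (2 * exp (2 * p)) + g1 x * (- 2 * exp (- 2 * p)))"
      by (rule cont2[OF continuous_on_subset[OF cf1 WU] continuous_on_subset[OF cg1 WU] cC2 cD2])
    show "continuous_on (W \<times> UNIV) (\<lambda>(x, p). f1 x * (2 * exp (2 * p)) + g1 x * (- 2 * exp (- 2 * p)))"
      by (rule cont2[OF continuous_on_subset[OF cf1 WU] continuous_on_subset[OF cg1 WU] cC2 cD2])
    show "continuous_on (W \<times> UNIV) (\<lambda>(x, p). vp x * (4 * exp (2 * p)) + vm x * (4 * exp (- 2 * p)))"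
      by (rule cont2[OF continuous_on_subset[OF cvp WU] continuous_on_subset[OF cvm WU] cC4 cD4])
  qed
  show "\<exists>\<epsilon>>0. \<exists>G. C2_2 G ({- 1 - \<epsilon><..<1 + \<epsilon>} \<times> UNIV) \<and>
      (\<forall>x\<in>{- 1..1}. \<forall>p. G x p = vp x * (exp (2 * p) - 1) + vm x * (exp (- 2 * p) - 1))"
  proof (rule exI[of _ \<epsilon>], rule conjI[OF e(1)],
      rule exI[of _ "\<lambda>x p. vp x * (exp (2 * p) - 1) + vm x * (exp (- 2 * p) - 1)"], rule conjI)
    show "C2_2 (\<lambda>x p. vp x * (exp (2 * p) - 1) + vm x * (exp (- 2 * p) - 1)) ({- 1 - \<epsilon><..<1 + \<epsilon>} \<times> UNIV)"
      using C2 unfolding W_def .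
  qed simp
qed

end

lemma exp2_ge: assumes "(p::real) \<ge> 0" shows "1 + p^2 \<le> exp (2 * p)"
proof -
  have "1 + p \<le> exp p" by (rule exp_ge_add_one_self)
  hence "(1 + p) * (1 + p) \<le> exp p * exp p" using assms by (intro mult_mono) auto
  moreover have "exp p * exp p = exp (2 * p)" by (metis exp_add mult_2)
  ultimately show ?thesis using assms by (simp add: power2_eq_square algebra_simps)
qed

lemma Hlow:
  fixes a b d M p :: real
  assumes "d > 0" "d \<le> a" "d \<le> b" "a \<le> M" "b \<le> M"
  shows "a * (exp (2 * p) - 1) + b * (exp (- 2 * p) - 1) \<ge> d * p^2 - M"
proof (cases "p \<ge> 0")
  case True
  have "p^2 \<le> exp (2 * p) - 1" using exp2_ge[OF True] by simp
  moreover have "d * p^2 \<le> a * p^2" using assms by (intro mult_right_mono) auto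
  moreover have "a * p^2 \<le> a * (exp (2 * p) - 1)" using assms calculation(1) by (intro mult_left_mono) auto
  ultimately have "d * p^2 \<le> a * (exp (2 * p) - 1)" by linarith
  moreover have "b * (exp (- 2 * p) - 1) \<ge> - M"
  proof -
    have "b * (exp (- 2 * p) - 1) \<ge> b * (- 1)" using assms by (intro mult_left_mono) auto
    thus ?thesis using assms by simp
  qed
  ultimately show ?thesis by simp
next
  case False
  have "p^2 \<le> exp (- 2 * p) - 1" using exp2_ge[of "-p"] False by simp
  moreover have "d * p^2 \<le> b * p^2" using assms by (intro mult_right_mono) auto
  moreover have "b * p^2 \<le> b * (exp (- 2 * p) - 1)" using assms calculation(1) by (intro mult_left_mono) auto
  ultimately have "d * p^2 \<le> b * (exp (- 2 * p) - 1)" by linarith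
  moreover have "a * (exp (2 * p) - 1) \<ge> - M"
  proof -
    have "a * (exp (2 * p) - 1) \<ge> a * (- 1)" using assms by (intro mult_left_mono) auto
    thus ?thesis using assms by simp
  qed
  ultimately show ?thesis by simp
qed

lemma lim_exp_lin: fixes c :: real assumes "c > 0"
  shows "filterlim (\<lambda>p. c * (exp (2 * p) - 1) / p) at_top at_top"
proof (subst filterlim_at_top, intro allI)
  fix Z :: real
  show "\<forall>\<^sub>F p in at_top. Z \<le> c * (exp (2 * p) - 1) / p"
  proof (rule eventually_at_top_linorder[THEN iffD2], intro exI allI impI)
    fix p assume p: "p \<ge> max 1 (Z / c)"
    hence p1: "p \<ge> 1" and pz: "c * p \<ge> Z" using assms by (auto simp: field_simps)
    have "p^2 \<le> exp (2 * p) - 1" using exp2_ge[of p] p1 by simp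
    hence "c * p^2 \<le> c * (exp (2 * p) - 1)" using assms by simp
    hence "c * p \<le> c * (exp (2 * p) - 1) / p" using p1 by (simp add: field_simps power2_eq_square)
    thus "Z \<le> c * (exp (2 * p) - 1) / p" using pz by simp
  qed
qed

context LA begin

lemma Kb: assumes K: "compact K" "K \<subseteq> {-1<..<1}"
  shows "\<exists>d M. d > 0 \<and> M \<ge> 0 \<and> (\<forall>x\<in>K. d \<le> vp x \<and> vp x \<le> M \<and> d \<le> vm x \<and> vm x \<le> M \<and>
            \<bar>f1 x\<bar> \<le> M \<and> \<bar>g1 x\<bar> \<le> M)"
proof (cases "K = {}")
  case True thus ?thesis by (intro exI[of _ 1] exI[of _ 0]) simp
next
  case ne: False
  have "{-1<..<1} \<subseteq> {-1..1::real}" by auto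
  hence KU: "K \<subseteq> U" using K(2) U(2) by (meson subset_trans)
  have c1: "continuous_on K (\<lambda>x. min (vp x) (vm x))"
    using continuous_on_subset[OF cvp KU] continuous_on_subset[OF cvm KU] by (intro continuous_intros)
  have c2: "continuous_on K (\<lambda>x. max (max \<bar>vp x\<bar> \<bar>vm x\<bar>) (max \<bar>f1 x\<bar> \<bar>g1 x\<bar>))"
    using continuous_on_subset[OF cvp KU] continuous_on_subset[OF cvm KU]
      continuous_on_subset[OF cf1 KU] continuous_on_subset[OF cg1 KU] by (intro continuous_intros)
  obtain s where s: "s \<in> K" "\<forall>t\<in>K. min (vp s) (vm s) \<le> min (vp t) (vm t)"
    using continuous_attains_inf[OF K(1) ne c1] by blast
  obtain t where t: "t \<in> K" "\<forall>y\<in>K. max (max \<bar>vp y\<bar> \<bar>vm y\<bar>) (max \<bar>f1 y\<bar> \<bar>g1 y\<bar>) \<le>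
       max (max \<bar>vp t\<bar> \<bar>vm t\<bar>) (max \<bar>f1 t\<bar> \<bar>g1 t\<bar>)"
    using continuous_attains_sup[OF K(1) ne c2] by blast
  have "min (vp s) (vm s) > 0" using pos_in[of s] s K by auto
  show ?thesis
  proof (rule exI[of _ "min (vp s) (vm s)"], rule exI[of _ "max (max \<bar>vp t\<bar> \<bar>vm t\<bar>) (max \<bar>f1 t\<bar> \<bar>g1 t\<bar>)"], intro conjI ballI)
    fix x assume x: "x \<in> K"
    have "min (vp s) (vm s) \<le> min (vp x) (vm x)" using s(2) x by blast
    thus "min (vp s) (vm s) \<le> vp x" "min (vp s) (vm s) \<le> vm x" by auto
    have tt: "max (max \<bar>vp x\<bar> \<bar>vm x\<bar>) (max \<bar>f1 x\<bar> \<bar>g1 x\<bar>) \<le> max (max \<bar>vp t\<bar> \<bar>vm t\<bar>) (max \<bar>f1 t\<bar> \<bar>g1 t\<bar>)"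
      using t(2) x by blast
    have q: "\<bar>vp x\<bar> \<le> max (max \<bar>vp x\<bar> \<bar>vm x\<bar>) (max \<bar>f1 x\<bar> \<bar>g1 x\<bar>)"
      "\<bar>vm x\<bar> \<le> max (max \<bar>vp x\<bar> \<bar>vm x\<bar>) (max \<bar>f1 x\<bar> \<bar>g1 x\<bar>)"
      "\<bar>f1 x\<bar> \<le> max (max \<bar>vp x\<bar> \<bar>vm x\<bar>) (max \<bar>f1 x\<bar> \<bar>g1 x\<bar>)"
      "\<bar>g1 x\<bar> \<le> max (max \<bar>vp x\<bar> \<bar>vm x\<bar>) (max \<bar>f1 x\<bar> \<bar>g1 x\<bar>)"
      by (simp_all add: le_max_iff_disj)
    have r: "vp x \<le> \<bar>vp x\<bar>" "vm x \<le> \<bar>vm x\<bar>" by auto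
    show "vp x \<le> max (max \<bar>vp t\<bar> \<bar>vm t\<bar>) (max \<bar>f1 t\<bar> \<bar>g1 t\<bar>)" using q(1) r(1) tt by linarith
    show "vm x \<le> max (max \<bar>vp t\<bar> \<bar>vm t\<bar>) (max \<bar>f1 t\<bar> \<bar>g1 t\<bar>)" using q(2) r(2) tt by linarith
    show "\<bar>f1 x\<bar> \<le> max (max \<bar>vp t\<bar> \<bar>vm t\<bar>) (max \<bar>f1 t\<bar> \<bar>g1 t\<bar>)" using q(3) tt by linarith
    show "\<bar>g1 x\<bar> \<le> max (max \<bar>vp t\<bar> \<bar>vm t\<bar>) (max \<bar>f1 t\<bar> \<bar>g1 t\<bar>)" using q(4) tt by linarith
  qed (use \<open>min (vp s) (vm s) > 0\<close> in auto)
qed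

lemma H3: "condH3 (\<lambda>x p. vp x * (exp (2 * p) - 1) + vm x * (exp (- 2 * p) - 1))"
  unfolding condH3_def
proof (intro conjI allI impI)
  fix K :: "real set" and B :: real
  assume K: "compact K \<and> K \<subseteq> {-1<..<1}"
  obtain d M where dM: "d > 0" "M \<ge> 0" "\<forall>x\<in>K. d \<le> vp x \<and> vp x \<le> M \<and> d \<le> vm x \<and> vm x \<le> M \<and>
            \<bar>f1 x\<bar> \<le> M \<and> \<bar>g1 x\<bar> \<le> M"
    using Kb[OF conjunct1[OF K] conjunct2[OF K]] by blast
  show "\<forall>\<^sub>F (p::real) in at_infinity. \<forall>x\<in>K. B \<le> (vp x * (exp (2 * p) - 1) + vm x * (exp (- 2 * p) - 1)) / \<bar>p\<bar>"
    unfolding eventually_at_infinity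
  proof (intro exI[of _ "max 1 ((\<bar>B\<bar> + M) / d)"] allI impI ballI)
    fix p :: real and x assume p: "max 1 ((\<bar>B\<bar> + M) / d) \<le> norm p" and x: "x \<in> K"
    have p1: "\<bar>p\<bar> \<ge> 1" and p2: "d * \<bar>p\<bar> \<ge> \<bar>B\<bar> + M" using p dM by (auto simp: field_simps)
    have H: "vp x * (exp (2 * p) - 1) + vm x * (exp (- 2 * p) - 1) \<ge> d * p^2 - M"
      using Hlow[of d "vp x" "vm x" M p] dM x by auto
    have "d * p^2 = (d * \<bar>p\<bar>) * \<bar>p\<bar>" by (simp add: power2_eq_square abs_mult_self_eq)
    also have "\<dots> \<ge> (\<bar>B\<bar> + M) * \<bar>p\<bar>" using p2 by (intro mult_right_mono) auto
    finally have "d * p^2 \<ge> \<bar>B\<bar> * \<bar>p\<bar> + M * \<bar>p\<bar>" by (simp add: algebra_simps)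
    moreover have "M * \<bar>p\<bar> \<ge> M" using p1 dM by (metis mult_cancel_left1 mult_left_mono)
    moreover have "\<bar>B\<bar> * \<bar>p\<bar> \<ge> B * \<bar>p\<bar>" by (intro mult_right_mono) auto
    ultimately have "B * \<bar>p\<bar> \<le> vp x * (exp (2 * p) - 1) + vm x * (exp (- 2 * p) - 1)" using H by linarith
    thus "B \<le> (vp x * (exp (2 * p) - 1) + vm x * (exp (- 2 * p) - 1)) / \<bar>p\<bar>"
      using p1 by (simp add: pos_le_divide_eq)
  qed
next
  have "filterlim (\<lambda>p. vp (-1) * (exp (2 * p) - 1) / p) at_top at_top"
    by (rule lim_exp_lin[OF vp_m1])
  thus "filterlim (\<lambda>p. (vp (- 1) * (exp (2 * p) - 1) + vm (- 1) * (exp (- 2 * p) - 1)) / p) at_top at_top"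
    by (simp add: vm_zero)
next
  have "filterlim (\<lambda>p. vm 1 * (exp (2 * p) - 1) / p) at_top at_top"
    by (rule lim_exp_lin[OF vm_1])
  hence "filterlim (\<lambda>p. (vp 1 * (exp (2 * (-p)) - 1) + vm 1 * (exp (- 2 * (-p)) - 1)) / (- (-p))) at_top at_top"
    by (simp add: vp_zero)
  thus "filterlim (\<lambda>p. (vp 1 * (exp (2 * p) - 1) + vm 1 * (exp (- 2 * p) - 1)) / - p) at_top at_bot"
    by (subst filterlim_at_bot_mirror) simp
qed

end

lemma argmin_val:
  fixes a b :: real assumes a: "a > 0" and b: "b > 0"
  shows "arg_min (\<lambda>p. a * (exp (2 * p) - 1) + b * (exp (- 2 * p) - 1)) (\<lambda>_. True) = (ln b - ln a) / 4"
proof -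
  define f where "f = (\<lambda>p::real. a * (exp (2 * p) - 1) + b * (exp (- 2 * p) - 1))"
  define p0 where "p0 = (ln b - ln a) / 4"
  have "4 * p0 = ln b - ln a" unfolding p0_def by simp
  hence e4: "exp (4 * p0) = b / a" using a b by (simp add: exp_diff)
  define k where "k = a * exp (2 * p0)"
  have kp: "k > 0" unfolding k_def using a by simp
  have bk: "b * exp (- 2 * p0) = k"
  proof -
    have E4: "exp (4 * p0) = exp (2 * p0) * exp (2 * p0)" by (simp add: exp_add[symmetric])
    have E: "exp (2 * p0) * exp (- 2 * p0) = 1" by (simp add: exp_add[symmetric])
    have bb: "b = a * exp (2 * p0) * exp (2 * p0)" using e4 E4 a by (simp add: field_simps)
    have "b * exp (- 2 * p0) = a * exp (2 * p0) * (exp (2 * p0) * exp (- 2 * p0))"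
      by (simp only: bb mult.assoc)
    thus ?thesis unfolding k_def E by simp
  qed
  have strict: "f p0 < f p" if "p \<noteq> p0" for p
  proof -
    define t where "t = p - p0"
    have t0: "t \<noteq> 0" using that t_def by simp
    have x1: "exp (2 * p) = exp (2 * p0) * exp (2 * t)" unfolding t_def by (simp add: mult_exp_exp algebra_simps)
    have x2: "exp (- 2 * p) = exp (- 2 * p0) * exp (- 2 * t)" unfolding t_def by (simp add: mult_exp_exp algebra_simps)
    have fp: "f p = k * (exp (2 * t) + exp (- 2 * t)) - a - b"
      unfolding f_def x1 x2 using bk k_def by (simp add: algebra_simps)
    have fp0: "f p0 = 2 * k - a - b"
      unfolding f_def using bk k_def by (simp add: algebra_simps)
    have sq: "exp (2 * t) + exp (- 2 * t) - 2 = (exp t - exp (- t))^2"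
      by (simp add: power2_eq_square algebra_simps mult_exp_exp)
    have "exp t \<noteq> exp (- t)" using t0 by simp
    hence "(exp t - exp (- t))^2 > 0" by simp
    hence "k * (exp (2 * t) + exp (- 2 * t) - 2) > 0" using kp sq by simp
    thus ?thesis using fp fp0 by (simp add: algebra_simps)
  qed
  have "arg_min f (\<lambda>_. True) = p0"
    unfolding arg_min_def is_arg_min_def
  proof (rule some_equality)
    show "True \<and> \<not> (\<exists>y. True \<and> f y < f p0)"
    proof (intro conjI notI TrueI)
      assume "\<exists>y. True \<and> f y < f p0"
      then obtain y where y: "f y < f p0" by blast
      show False
      proof (cases "y = p0")
        case True thus False using y by simp
      next
        case False thus False using y strict[OF False] by simp
      qed
    qed
    fix x assume "True \<and> \<not> (\<exists>y. True \<and> f y < f x)"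
    thus "x = p0" using strict by blast
  qed
  thus ?thesis unfolding f_def p0_def .
qed

context LA begin

lemma tend_right: "(vm \<longlongrightarrow> 0) (at_right (-1))" "(vp \<longlongrightarrow> vp (-1)) (at_right (-1))"
proof -
  have m1: "-1 \<in> U" using U by auto
  have "isCont vm (-1)" "isCont vp (-1)" using DERIV_isCont[OF dvm[OF m1]] DERIV_isCont[OF dvp[OF m1]] .
  thus "(vm \<longlongrightarrow> 0) (at_right (-1))" "(vp \<longlongrightarrow> vp (-1)) (at_right (-1))"
    unfolding isCont_def using vm_zero by (auto intro: tendsto_mono[OF at_le[OF subset_UNIV]])
qed

lemma tend_left: "(vp \<longlongrightarrow> 0) (at_left 1)" "(vm \<longlongrightarrow> vm 1) (at_left 1)"
proof -
  have m1: "1 \<in> U" using U by auto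
  have "isCont vm 1" "isCont vp 1" using DERIV_isCont[OF dvm[OF m1]] DERIV_isCont[OF dvp[OF m1]] .
  thus "(vp \<longlongrightarrow> 0) (at_left 1)" "(vm \<longlongrightarrow> vm 1) (at_left 1)"
    unfolding isCont_def using vp_zero by (auto intro: tendsto_mono[OF at_le[OF subset_UNIV]])
qed

lemma H4: "condH4 (\<lambda>x p. vp x * (exp (2 * p) - 1) + vm x * (exp (- 2 * p) - 1))"
  unfolding condH4_def argminH_def
proof
  have ev: "\<forall>\<^sub>F x in at_right (-1). x \<in> {-1<..<(1::real)}" using eventually_at_right_real[of "-1" "1::real"] by simp
  have ev2: "\<forall>\<^sub>F x in at_right (-1). arg_min (\<lambda>p. vp x * (exp (2 * p) - 1) + vm x * (exp (- 2 * p) - 1)) (\<lambda>_. True)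
      = (ln (vm x) - ln (vp x)) / 4"
    using ev by eventually_elim (use pos_in argmin_val in auto)
  have evm: "\<forall>\<^sub>F x in at_right (-1). vm x \<in> {0<..} \<and> vm x \<noteq> 0"
    using ev by eventually_elim (use pos_in in force)
  have fvm: "filterlim vm (at_right 0) (at_right (-1))"
    unfolding filterlim_at using evm tend_right(1) by blast
  have l1: "filterlim (\<lambda>x. ln (vm x)) at_bot (at_right (-1))"
    by (rule filterlim_compose[OF ln_at_0 fvm])
  have l2: "((\<lambda>x. - ln (vp x)) \<longlongrightarrow> - ln (vp (-1))) (at_right (-1))"
    using vp_m1 by (intro tendsto_minus tendsto_ln tend_right(2)) auto
  have l3: "filterlim (\<lambda>x. - ln (vp x) + ln (vm x)) at_bot (at_right (-1))"
    by (rule filterlim_tendsto_add_at_bot_iff[OF l2, THEN iffD2, OF l1])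
  have l4: "filterlim (\<lambda>x. (1/4) * (- ln (vp x) + ln (vm x))) at_bot (at_right (-1))"
    by (rule filterlim_tendsto_pos_mult_at_bot[OF tendsto_const _ l3]) simp
  have e: "(\<lambda>x. (1/4) * (- ln (vp x) + ln (vm x))) = (\<lambda>x. (ln (vm x) - ln (vp x)) / 4)"
    by (rule ext) (simp add: algebra_simps)
  show "filterlim (\<lambda>x. arg_min (\<lambda>p. vp x * (exp (2 * p) - 1) + vm x * (exp (- 2 * p) - 1)) (\<lambda>_. True)) at_bot (at_right (- 1))"
    by (subst filterlim_cong[OF refl refl ev2]) (rule l4[unfolded e])
next
  have ev: "\<forall>\<^sub>F x in at_left 1. x \<in> {-1<..<(1::real)}" using eventually_at_left_real[of "-1::real" "1"] by simp
  have ev2: "\<forall>\<^sub>F x in at_left 1. arg_min (\<lambda>p. vp x * (exp (2 * p) - 1) + vm x * (exp (- 2 * p) - 1)) (\<lambda>_. True)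
      = (ln (vm x) - ln (vp x)) / 4"
    using ev by eventually_elim (use pos_in argmin_val in auto)
  have evp: "\<forall>\<^sub>F x in at_left 1. vp x \<in> {0<..} \<and> vp x \<noteq> 0"
    using ev by eventually_elim (use pos_in in force)
  have fvp: "filterlim vp (at_right 0) (at_left 1)"
    unfolding filterlim_at using evp tend_left(1) by blast
  have l1: "filterlim (\<lambda>x. ln (vp x)) at_bot (at_left 1)"
    by (rule filterlim_compose[OF ln_at_0 fvp])
  have l1': "filterlim (\<lambda>x. - ln (vp x)) at_top (at_left 1)"
    by (rule filterlim_uminus_at_bot[THEN iffD1, OF l1])
  have l2: "((\<lambda>x. ln (vm x)) \<longlongrightarrow> ln (vm 1)) (at_left 1)"
    using vm_1 by (intro tendsto_ln tend_left(2)) auto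
  have l3: "filterlim (\<lambda>x. ln (vm x) + - ln (vp x)) at_top (at_left 1)"
    by (rule filterlim_tendsto_add_at_top[OF l2 l1'])
  have l4: "filterlim (\<lambda>x. (1/4) * (ln (vm x) + - ln (vp x))) at_top (at_left 1)"
    by (rule filterlim_tendsto_pos_mult_at_top[OF tendsto_const _ l3]) simp
  have e: "(\<lambda>x. (1/4) * (ln (vm x) + - ln (vp x))) = (\<lambda>x. (ln (vm x) - ln (vp x)) / 4)"
    by (rule ext) (simp add: algebra_simps)
  show "filterlim (\<lambda>x. arg_min (\<lambda>p. vp x * (exp (2 * p) - 1) + vm x * (exp (- 2 * p) - 1)) (\<lambda>_. True)) at_top (at_left 1)"
    by (subst filterlim_cong[OF refl refl ev2]) (rule l4[unfolded e])
qed

lemma pdp_eq: "pdp (\<lambda>x p. vp x * (exp (2 * p) - 1) + vm x * (exp (- 2 * p) - 1)) y q =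
   2 * vp y * exp (2 * q) - 2 * vm y * exp (- 2 * q)"
  unfolding pdp_def deriv_Hp ..

lemma pdx_eq: assumes y: "y \<in> {-1..1}"
  shows "pdx (\<lambda>x p. vp x * (exp (2 * p) - 1) + vm x * (exp (- 2 * p) - 1)) y q =
     f1 y * (exp (2 * q) - 1) + g1 y * (exp (- 2 * q) - 1)"
  unfolding pdx_def
proof (rule the_equality)
  have yU: "y \<in> U" using y U by auto
  have D: "((\<lambda>y. vp y * (exp (2 * q) - 1) + vm y * (exp (- 2 * q) - 1)) has_real_derivative
      f1 y * (exp (2 * q) - 1) + g1 y * (exp (- 2 * q) - 1)) (at y)"
    by (auto intro!: derivative_eq_intros dvp[OF yU] dvm[OF yU])
  thus W: "((\<lambda>y. vp y * (exp (2 * q) - 1) + vm y * (exp (- 2 * q) - 1)) has_real_derivative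
      f1 y * (exp (2 * q) - 1) + g1 y * (exp (- 2 * q) - 1)) (at y within {-1..1})"
    by (rule has_field_derivative_at_within)
  fix D' assume D': "((\<lambda>y. vp y * (exp (2 * q) - 1) + vm y * (exp (- 2 * q) - 1)) has_real_derivative D') (at y within {-1..1})"
  show "D' = f1 y * (exp (2 * q) - 1) + g1 y * (exp (- 2 * q) - 1)"
    using vector_derivative_unique_within_closed_interval[of "-1" 1 y]
      D' W y unfolding has_real_derivative_iff_has_vector_derivative cbox_interval by auto
qed

end

lemma seq_to_zero: "(\<lambda>n. s / (1 + real n)) \<longlonglongrightarrow> 0"
  by (rule real_tendsto_divide_at_top[OF tendsto_const filterlim_tendsto_add_at_top[OF tendsto_const filterlim_real_sequentially]])

context LA begin

lemma H5p: "\<exists>yp qp :: nat \<Rightarrow> real.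
       (\<forall>n. yp n \<in> {-1<..<1} \<and> qp n > 0) \<and> yp \<longlonglongrightarrow> 1 \<and> filterlim qp at_top sequentially \<and>
       (\<forall>n. (\<forall>q\<ge>qp n. pdp (\<lambda>x p. vp x * (exp (2 * p) - 1) + vm x * (exp (- 2 * p) - 1)) (yp n) q \<ge> 0) \<and>
            (\<forall>y\<in>{yp n..1}. - pdx (\<lambda>x p. vp x * (exp (2 * p) - 1) + vm x * (exp (- 2 * p) - 1)) y (qp n) \<ge> 0))"
proof -
  have p1U: "1 \<in> U" using U by auto
  have cf: "isCont f1 1" by (rule DERIV_isCont[OF df1[OF p1U]])
  define \<alpha> where "\<alpha> = - f1 1 / 2"
  have al: "\<alpha> > 0" unfolding \<alpha>_def using f1_1 by simp
  obtain \<rho> where rho: "\<rho> > 0" "\<forall>y. dist y 1 < \<rho> \<longrightarrow> dist (f1 y) (f1 1) < \<alpha>"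
    using cf al unfolding continuous_at_eps_delta by blast
  have fneg: "f1 y < - \<alpha>" if "\<bar>y - 1\<bar> < \<rho>" for y
  proof -
    have "\<bar>f1 y - f1 1\<bar> < \<alpha>" using rho(2) that by (simp add: dist_real_def)
    thus ?thesis unfolding \<alpha>_def by linarith
  qed
  have cg: "continuous_on {-1..1} (\<lambda>y. \<bar>g1 y\<bar>)"
    using continuous_on_subset[OF cg1 U(2)] by (intro continuous_intros)
  obtain t where t: "t \<in> {-1..1}" "\<forall>y\<in>{-1..1}. \<bar>g1 y\<bar> \<le> \<bar>g1 t\<bar>"
    using continuous_attains_sup[OF compact_Icc _ cg] by auto
  define Mg where "Mg = \<bar>g1 t\<bar>"
  have Mg0: "Mg \<ge> 0" unfolding Mg_def by simp
  define s where "s = min 1 (\<rho> / 2)"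
  have s: "0 < s" "s \<le> 1" "s \<le> \<rho> / 2" unfolding s_def using rho by auto
  define yp where "yp = (\<lambda>n::nat. 1 - s / (1 + real n))"
  define qp where "qp = (\<lambda>n::nat. real n + Mg / (2 * \<alpha>) + 1 + \<bar>ln (vm (yp n)) - ln (vp (yp n))\<bar> / 4)"
  have sn: "0 < s / (1 + real n)" "s / (1 + real n) \<le> s" for n
    using s by (auto simp: field_simps)
  have yp_in: "yp n \<in> {-1<..<1}" for n using sn[of n] s unfolding yp_def by auto
  have qp_ge: "qp n \<ge> real n + Mg / (2 * \<alpha>) + 1" for n
    unfolding qp_def by simp
  have MA: "Mg / (2 * \<alpha>) \<ge> 0" using Mg0 al by simp
  show ?thesis
  proof (rule exI[of _ yp], rule exI[of _ qp], intro conjI allI ballI impI)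
    fix n
    show "yp n \<in> {-1<..<1}" by (rule yp_in)
    show "qp n > 0" using qp_ge[of n] MA by linarith
  next
    show "yp \<longlonglongrightarrow> 1" unfolding yp_def using tendsto_diff[OF tendsto_const[of 1] seq_to_zero[of s]] by simp
  next
    have "\<forall>n. real n \<le> qp n"
    proof
      fix n show "real n \<le> qp n" using qp_ge[of n] MA by linarith
    qed
    thus "filterlim qp at_top sequentially"
      by (rule filterlim_at_top_mono[OF filterlim_real_sequentially always_eventually])
  next
    fix n and q :: real assume q: "q \<ge> qp n"
    define y where "y = yp n"
    have pos: "vp y > 0" "vm y > 0" using pos_in yp_in y_def by auto
    have "ln (vm y) - ln (vp y) \<le> \<bar>ln (vm (yp n)) - ln (vp (yp n))\<bar>" unfolding y_def by simp
    also have "\<dots> \<le> 4 * qp n" unfolding qp_def using MA by simp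
    also have "\<dots> \<le> 4 * q" using q by simp
    finally have "ln (vm y) \<le> ln (vp y) + 4 * q" by simp
    hence "exp (ln (vm y)) \<le> exp (ln (vp y) + 4 * q)" by simp
    hence "vm y \<le> vp y * exp (4 * q)" using pos by (simp add: exp_add)
    hence "vm y * exp (- 2 * q) \<le> vp y * exp (4 * q) * exp (- 2 * q)" by (intro mult_right_mono) auto
    also have "vp y * exp (4 * q) * exp (- 2 * q) = vp y * exp (2 * q)"
      by (simp add: mult.assoc exp_add[symmetric])
    finally show "0 \<le> pdp (\<lambda>x p. vp x * (exp (2 * p) - 1) + vm x * (exp (- 2 * p) - 1)) (yp n) q"
      unfolding pdp_eq y_def[symmetric] by simp
  next
    fix n y assume y: "y \<in> {yp n..1}"
    have ym: "y \<in> {-1..1}" using y yp_in[of n] by auto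
    have "\<bar>y - 1\<bar> \<le> s / (1 + real n)" using y unfolding yp_def by auto
    hence "\<bar>y - 1\<bar> < \<rho>" using sn[of n] s rho by linarith
    hence fy: "f1 y < - \<alpha>" by (rule fneg)
    define q where "q = qp n"
    have q1: "q \<ge> Mg / (2 * \<alpha>) + 1" using qp_ge[of n] unfolding q_def by simp
    have q0: "q > 0" using q1 MA by linarith
    have A: "exp (2 * q) - 1 \<ge> 2 * q" using exp_ge_add_one_self[of "2 * q"] by linarith
    have "f1 y * (exp (2 * q) - 1) \<le> - \<alpha> * (exp (2 * q) - 1)"
      using fy A q0 by (intro mult_right_mono) auto
    also have "\<dots> \<le> - \<alpha> * (2 * q)" using A al by simp
    finally have T1: "f1 y * (exp (2 * q) - 1) \<le> - \<alpha> * (2 * q)" .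
    have E1: "\<bar>exp (- 2 * q) - 1\<bar> \<le> 1"
    proof -
      have "exp (- 2 * q) \<le> 1" using q0 by simp
      moreover have "exp (- 2 * q) > 0" by simp
      ultimately show ?thesis by linarith
    qed
    have "g1 y * (exp (- 2 * q) - 1) \<le> \<bar>g1 y\<bar> * \<bar>exp (- 2 * q) - 1\<bar>"
      by (metis abs_ge_self abs_mult)
    also have "\<dots> \<le> Mg * 1" unfolding Mg_def using t(2) ym E1 by (intro mult_mono) auto
    finally have T2: "g1 y * (exp (- 2 * q) - 1) \<le> Mg" by simp
    have "\<alpha> * (2 * q) \<ge> \<alpha> * (2 * (Mg / (2 * \<alpha>) + 1))" using q1 al by simp
    also have "\<alpha> * (2 * (Mg / (2 * \<alpha>) + 1)) = Mg + 2 * \<alpha>" using al by (simp add: field_simps)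
    finally have T3: "\<alpha> * (2 * q) \<ge> Mg + 2 * \<alpha>" .
    show "0 \<le> - pdx (\<lambda>x p. vp x * (exp (2 * p) - 1) + vm x * (exp (- 2 * p) - 1)) y (qp n)"
      unfolding pdx_eq[OF ym] q_def[symmetric] using T1 T2 T3 al by linarith
  qed
qed

lemma H5m: "\<exists>ym qm :: nat \<Rightarrow> real.
       (\<forall>n. ym n \<in> {-1<..<1} \<and> qm n < 0) \<and> ym \<longlonglongrightarrow> -1 \<and> filterlim qm at_bot sequentially \<and>
       (\<forall>n. (\<forall>q\<le>qm n. pdp (\<lambda>x p. vp x * (exp (2 * p) - 1) + vm x * (exp (- 2 * p) - 1)) (ym n) q \<le> 0) \<and>
            (\<forall>y\<in>{-1..ym n}. - pdx (\<lambda>x p. vp x * (exp (2 * p) - 1) + vm x * (exp (- 2 * p) - 1)) y (qm n) \<le> 0))"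
proof -
  have m1U: "-1 \<in> U" using U by auto
  have cg: "isCont g1 (-1)" by (rule DERIV_isCont[OF dg1[OF m1U]])
  define \<beta> where "\<beta> = g1 (-1) / 2"
  have be: "\<beta> > 0" unfolding \<beta>_def using g1_m1 by simp
  obtain \<rho> where rho: "\<rho> > 0" "\<forall>y. dist y (-1) < \<rho> \<longrightarrow> dist (g1 y) (g1 (-1)) < \<beta>"
    using cg be unfolding continuous_at_eps_delta by blast
  have gpos: "g1 y > \<beta>" if "\<bar>y + 1\<bar> < \<rho>" for y
  proof -
    have "\<bar>g1 y - g1 (-1)\<bar> < \<beta>" using rho(2) that by (simp add: dist_real_def)
    thus ?thesis unfolding \<beta>_def by linarith
  qed
  have cf: "continuous_on {-1..1} (\<lambda>y. \<bar>f1 y\<bar>)"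
    using continuous_on_subset[OF cf1 U(2)] by (intro continuous_intros)
  obtain t where t: "t \<in> {-1..1}" "\<forall>y\<in>{-1..1}. \<bar>f1 y\<bar> \<le> \<bar>f1 t\<bar>"
    using continuous_attains_sup[OF compact_Icc _ cf] by auto
  define Mf where "Mf = \<bar>f1 t\<bar>"
  have Mf0: "Mf \<ge> 0" unfolding Mf_def by simp
  define s where "s = min 1 (\<rho> / 2)"
  have s: "0 < s" "s \<le> 1" "s \<le> \<rho> / 2" unfolding s_def using rho by auto
  define ym where "ym = (\<lambda>n::nat. -1 + s / (1 + real n))"
  define Q where "Q = (\<lambda>n::nat. real n + Mf / (2 * \<beta>) + 1 + \<bar>ln (vm (ym n)) - ln (vp (ym n))\<bar> / 4)"
  define qm where "qm = (\<lambda>n. - Q n)"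
  have sn: "0 < s / (1 + real n)" "s / (1 + real n) \<le> s" for n
    using s by (auto simp: field_simps)
  have ym_in: "ym n \<in> {-1<..<1}" for n using sn[of n] s unfolding ym_def by auto
  have Q_ge: "Q n \<ge> real n + Mf / (2 * \<beta>) + 1" for n
    unfolding Q_def by simp
  have MA: "Mf / (2 * \<beta>) \<ge> 0" using Mf0 be by simp
  show ?thesis
  proof (rule exI[of _ ym], rule exI[of _ qm], intro conjI allI ballI impI)
    fix n
    show "ym n \<in> {-1<..<1}" by (rule ym_in)
    show "qm n < 0" unfolding qm_def using Q_ge[of n] MA by linarith
  next
    show "ym \<longlonglongrightarrow> -1" unfolding ym_def using tendsto_add[OF tendsto_const[of "-1"] seq_to_zero[of s]] by simp
  next
    have "\<forall>n. real n \<le> Q n"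
    proof
      fix n show "real n \<le> Q n" using Q_ge[of n] MA by linarith
    qed
    hence "filterlim Q at_top sequentially"
      by (rule filterlim_at_top_mono[OF filterlim_real_sequentially always_eventually])
    thus "filterlim qm at_bot sequentially"
      unfolding qm_def by (rule filterlim_uminus_at_top[THEN iffD1])
  next
    fix n and q :: real assume q: "q \<le> qm n"
    define y where "y = ym n"
    have pos: "vp y > 0" "vm y > 0" using pos_in ym_in y_def by auto
    have "4 * q \<le> 4 * qm n" using q by simp
    also have "\<dots> \<le> - \<bar>ln (vm (ym n)) - ln (vp (ym n))\<bar>" unfolding qm_def Q_def using MA by simp
    also have "\<dots> \<le> ln (vm y) - ln (vp y)" unfolding y_def by simp
    finally have "ln (vp y) + 4 * q \<le> ln (vm y)" by simp
    hence "exp (ln (vp y) + 4 * q) \<le> exp (ln (vm y))" by simp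
    hence "vp y * exp (4 * q) \<le> vm y" using pos by (simp add: exp_add)
    hence X: "vp y * exp (4 * q) * exp (- 2 * q) \<le> vm y * exp (- 2 * q)" by (intro mult_right_mono) auto
    have Y: "vp y * exp (4 * q) * exp (- 2 * q) = vp y * exp (2 * q)"
      by (simp add: mult.assoc exp_add[symmetric])
    have "vp y * exp (2 * q) \<le> vm y * exp (- 2 * q)" using X unfolding Y .
    thus "pdp (\<lambda>x p. vp x * (exp (2 * p) - 1) + vm x * (exp (- 2 * p) - 1)) (ym n) q \<le> 0"
      unfolding pdp_eq y_def[symmetric] by simp
  next
    fix n y assume y: "y \<in> {-1..ym n}"
    have ym: "y \<in> {-1..1}" using y ym_in[of n] by auto
    have "\<bar>y + 1\<bar> \<le> s / (1 + real n)" using y unfolding ym_def by auto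
    hence "\<bar>y + 1\<bar> < \<rho>" using sn[of n] s rho by linarith
    hence gy: "g1 y > \<beta>" by (rule gpos)
    define q where "q = qm n"
    have q1: "- q \<ge> Mf / (2 * \<beta>) + 1" using Q_ge[of n] unfolding q_def qm_def by simp
    have q0: "q < 0" using q1 MA by linarith
    have A: "exp (- 2 * q) - 1 \<ge> - 2 * q" using exp_ge_add_one_self[of "- 2 * q"] by linarith
    have "g1 y * (exp (- 2 * q) - 1) \<ge> \<beta> * (exp (- 2 * q) - 1)"
      using gy A q0 by (intro mult_right_mono) auto
    moreover have "\<beta> * (exp (- 2 * q) - 1) \<ge> \<beta> * (- 2 * q)" using A be by (intro mult_left_mono) auto
    ultimately have T1: "g1 y * (exp (- 2 * q) - 1) \<ge> \<beta> * (- 2 * q)" by linarith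
    have E1: "\<bar>exp (2 * q) - 1\<bar> \<le> 1"
    proof -
      have "exp (2 * q) \<le> 1" using q0 by simp
      moreover have "exp (2 * q) > 0" by simp
      ultimately show ?thesis by linarith
    qed
    have "- (f1 y * (exp (2 * q) - 1)) \<le> \<bar>f1 y\<bar> * \<bar>exp (2 * q) - 1\<bar>"
      by (metis abs_ge_minus_self abs_mult)
    also have "\<dots> \<le> Mf * 1" unfolding Mf_def using t(2) ym E1 by (intro mult_mono) auto
    finally have T2: "f1 y * (exp (2 * q) - 1) \<ge> - Mf" by simp
    have "\<beta> * (- 2 * q) \<ge> \<beta> * (2 * (Mf / (2 * \<beta>) + 1))" using q1 be by (intro mult_left_mono) auto
    also have "\<beta> * (2 * (Mf / (2 * \<beta>) + 1)) = Mf + 2 * \<beta>" using be by (simp add: field_simps)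
    finally have T3: "\<beta> * (- 2 * q) \<ge> Mf + 2 * \<beta>" .
    show "- pdx (\<lambda>x p. vp x * (exp (2 * p) - 1) + vm x * (exp (- 2 * p) - 1)) y (qm n) \<le> 0"
      unfolding pdx_eq[OF ym] q_def[symmetric] using T1 T2 T3 be by linarith
  qed
qed

lemma H5: "condH5 (\<lambda>x p. vp x * (exp (2 * p) - 1) + vm x * (exp (- 2 * p) - 1))"
  unfolding condH5_def by (rule conjI[OF H5p H5m])

end

lemma Lbound:
  fixes a b d M v A1 B1 :: real
  assumes d: "d > 0" and ab: "d \<le> a" "a \<le> M" "d \<le> b" "b \<le> M" and AB: "\<bar>A1\<bar> \<le> M" "\<bar>B1\<bar> \<le> M"
  shows "\<bar>- (A1 * (Yf a b v - 1)) - B1 * (1 / Yf a b v - 1)\<bar> + \<bar>ln (Yf a b v) / 2\<bar>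
     \<le> ((1 + 2*M) * (1 + M) / d + 2*M) * (1 + \<bar>v\<bar>)"
proof -
  have a0: "a > 0" and b0: "b > 0" using d ab by auto
  have M0: "M \<ge> 0" using a0 ab by simp
  define S where "S = sqrt (v^2 + 16*a*b)"
  define Y where "Y = Yf a b v"
  have Yp: "Y > 0" unfolding Y_def by (rule Yf_pos[OF a0 b0])
  have "a*b \<le> M*M" using ab a0 b0 by (intro mult_mono) auto
  moreover have e: "(\<bar>v\<bar> + 4*M)^2 = v^2 + 8*(M*\<bar>v\<bar>) + 16*(M*M)"
    by (simp add: power2_eq_square algebra_simps)
  moreover have "M*\<bar>v\<bar> \<ge> 0" using M0 by simp
  ultimately have "v^2 + 16*a*b \<le> (\<bar>v\<bar> + 4*M)^2" by linarith
  hence "S \<le> sqrt ((\<bar>v\<bar> + 4*M)^2)" unfolding S_def by (rule real_sqrt_le_mono)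
  hence S1: "S \<le> \<bar>v\<bar> + 4*M" using M0 by simp
  define R where "R = (2 * \<bar>v\<bar> + 4*M) / (4*d)"
  have R0: "R \<ge> 0" unfolding R_def using d M0 by simp
  have YR: "Y \<le> R"
  proof -
    have "Y = (v + S) / (4*a)" unfolding Y_def Yf_def S_def ..
    also have "\<dots> \<le> (2 * \<bar>v\<bar> + 4*M) / (4*a)" using S1 a0 by (intro divide_right_mono) auto
    also have "\<dots> \<le> R" unfolding R_def using d ab M0 by (intro divide_left_mono) auto
    finally show ?thesis .
  qed
  have YiR: "1 / Y \<le> R"
  proof -
    have "1 / Y = (S - v) / (4*b)" unfolding Y_def S_def by (rule Yf_inv[OF a0 b0])
    also have "\<dots> \<le> (2 * \<bar>v\<bar> + 4*M) / (4*b)" using S1 b0 by (intro divide_right_mono) auto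
    also have "\<dots> \<le> R" unfolding R_def using d ab M0 by (intro divide_left_mono) auto
    finally show ?thesis .
  qed
  have l1: "ln Y \<le> R" using ln_le_minus_one[OF Yp] YR by linarith
  have l2: "- ln Y \<le> R"
  proof -
    have "ln (1 / Y) \<le> 1 / Y - 1" using Yp by (intro ln_le_minus_one) simp
    thus ?thesis using YiR Yp by (simp add: ln_div)
  qed
  have lnb: "\<bar>ln Y / 2\<bar> \<le> R" using l1 l2 R0 by linarith
  have t1: "\<bar>A1 * (Y - 1)\<bar> \<le> M * (R + 1)"
  proof -
    have "\<bar>Y - 1\<bar> \<le> R + 1" using YR Yp by linarith
    hence "\<bar>A1\<bar> * \<bar>Y - 1\<bar> \<le> M * (R + 1)" using AB(1) by (intro mult_mono) auto
    thus ?thesis by (simp add: abs_mult)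
  qed
  have t2: "\<bar>B1 * (1 / Y - 1)\<bar> \<le> M * (R + 1)"
  proof -
    have "1 / Y > 0" using Yp by simp
    hence "\<bar>1 / Y - 1\<bar> \<le> R + 1" using YiR by linarith
    hence "\<bar>B1\<bar> * \<bar>1 / Y - 1\<bar> \<le> M * (R + 1)" using AB(2) by (intro mult_mono) auto
    thus ?thesis by (simp add: abs_mult)
  qed
  have tot: "\<bar>- (A1 * (Y - 1)) - B1 * (1 / Y - 1)\<bar> + \<bar>ln Y / 2\<bar> \<le> (1 + 2*M) * R + 2*M"
    using t1 t2 lnb by (simp add: algebra_simps)
  have RR: "R \<le> (1 + M) * (1 + \<bar>v\<bar>) / d"
  proof -
    have e2: "4 * ((1 + M) * (1 + \<bar>v\<bar>)) = 4 + 4*\<bar>v\<bar> + 4*M + 4*(M*\<bar>v\<bar>)"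
      by (simp add: algebra_simps)
    have "M*\<bar>v\<bar> \<ge> 0" using M0 by simp
    hence "2 * \<bar>v\<bar> + 4*M \<le> 4 * ((1 + M) * (1 + \<bar>v\<bar>))" unfolding e2 by linarith
    hence "(2 * \<bar>v\<bar> + 4*M) / (4*d) \<le> 4 * ((1 + M) * (1 + \<bar>v\<bar>)) / (4*d)" using d
      by (intro divide_right_mono) auto
    thus ?thesis unfolding R_def using d by simp
  qed
  have "(1 + 2*M) * R \<le> (1 + 2*M) * ((1 + M) * (1 + \<bar>v\<bar>) / d)" using RR M0 by (intro mult_left_mono) auto
  moreover have "2*M \<le> 2*M * (1 + \<bar>v\<bar>)" using M0 by (simp add: algebra_simps)
  moreover have "(1 + 2*M) * ((1 + M) * (1 + \<bar>v\<bar>) / d) + 2*M * (1 + \<bar>v\<bar>) = ((1 + 2*M) * (1 + M) / d + 2*M) * (1 + \<bar>v\<bar>)"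
    by (simp add: algebra_simps)
  ultimately show ?thesis using tot unfolding Y_def by linarith
qed

context LA begin

lemma LagH: assumes "y \<in> {-1<..<1}"
  shows "Lag (\<lambda>x p. vp x * (exp (2 * p) - 1) + vm x * (exp (- 2 * p) - 1)) y v = ereal (Lf (vp y) (vm y) v)"
  unfolding Lag_def using Lag_eq[of "vp y" "vm y" v] pos_in[OF assms] by simp

end

context LA begin

lemma H2: "condH2 (\<lambda>x p. vp x * (exp (2 * p) - 1) + vm x * (exp (- 2 * p) - 1))"
  unfolding condH2_def
proof (intro allI impI)
  fix K :: "real set"
  assume K: "compact K \<and> K \<subseteq> {-1<..<1}"
  obtain d M where dM: "d > 0" "M \<ge> 0" "\<forall>x\<in>K. d \<le> vp x \<and> vp x \<le> M \<and> d \<le> vm x \<and> vm x \<le> M \<and>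
            \<bar>f1 x\<bar> \<le> M \<and> \<bar>g1 x\<bar> \<le> M"
    using Kb[OF conjunct1[OF K] conjunct2[OF K]] by blast
  define K0 where "K0 = (1 + 2*M) * (1 + M) / d + 2*M"
  have K00: "K0 \<ge> 0" unfolding K0_def using dM by simp
  define c where "c = M + 1 + (M + 1) * exp (4 * M + 2)"
  show "\<exists>\<theta>::real\<Rightarrow>real.
        (\<forall>r\<ge>0. \<theta> r \<ge> 0) \<and>
        filterlim (\<lambda>r. \<theta> r / r) at_top at_top \<and>
        (\<forall>M\<ge>0. \<exists>k. \<forall>m\<in>{0..M}. \<forall>r\<ge>0. \<theta> (r + m) \<le> k * (1 + \<theta> r)) \<and>
        (\<exists>c C. \<forall>x\<in>K. \<forall>v.
            Lag (\<lambda>x p. vp x * (exp (2 * p) - 1) + vm x * (exp (- 2 * p) - 1)) x v \<ge> ereal (\<theta> \<bar>v\<bar> - c) \<and>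
            (\<exists>Lx Lv. Lag_dx (\<lambda>x p. vp x * (exp (2 * p) - 1) + vm x * (exp (- 2 * p) - 1)) x v Lx \<and>
                     Lag_dv (\<lambda>x p. vp x * (exp (2 * p) - 1) + vm x * (exp (- 2 * p) - 1)) x v Lv \<and>
                     \<bar>Lx\<bar> + \<bar>Lv\<bar> \<le> C * \<theta> \<bar>v\<bar>))"
  proof (rule exI[of _ th0], intro conjI allI impI)
    show "\<And>r. 0 \<le> r \<Longrightarrow> 0 \<le> th0 r" by (rule th0_nonneg)
    show "filterlim (\<lambda>r. th0 r / r) at_top at_top" by (rule th0_lim)
    show "\<And>M. 0 \<le> M \<Longrightarrow> \<exists>k. \<forall>m\<in>{0..M}. \<forall>r\<ge>0. th0 (r + m) \<le> k * (1 + th0 r)" by (rule th0_doubling)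
    show "\<exists>c C. \<forall>x\<in>K. \<forall>v.
            Lag (\<lambda>x p. vp x * (exp (2 * p) - 1) + vm x * (exp (- 2 * p) - 1)) x v \<ge> ereal (th0 \<bar>v\<bar> - c) \<and>
            (\<exists>Lx Lv. Lag_dx (\<lambda>x p. vp x * (exp (2 * p) - 1) + vm x * (exp (- 2 * p) - 1)) x v Lx \<and>
                     Lag_dv (\<lambda>x p. vp x * (exp (2 * p) - 1) + vm x * (exp (- 2 * p) - 1)) x v Lv \<and>
                     \<bar>Lx\<bar> + \<bar>Lv\<bar> \<le> C * th0 \<bar>v\<bar>)"
    proof (rule exI[of _ c], rule exI[of _ "4 * K0"], intro ballI allI conjI)
      fix x v assume xK: "x \<in> K"
      have xin: "x \<in> {-1<..<1}" using xK K by auto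
      have xU: "x \<in> U" using xin U by auto
      have bx: "d \<le> vp x" "vp x \<le> M" "d \<le> vm x" "vm x \<le> M" "\<bar>f1 x\<bar> \<le> M" "\<bar>g1 x\<bar> \<le> M"
        using dM(3) xK by auto
      have ap: "vp x > 0" "vm x > 0" using pos_in[OF xin] by auto
      show "ereal (th0 \<bar>v\<bar> - c) \<le> Lag (\<lambda>x p. vp x * (exp (2 * p) - 1) + vm x * (exp (- 2 * p) - 1)) x v"
        unfolding LagH[OF xin] c_def using Lf_lower[of "vp x" M "vm x" v] ap bx by simp
      define Y where "Y = Yf (vp x) (vm x) v"
      define Lx where "Lx = - (f1 x * (Y - 1)) - g1 x * (1 / Y - 1)"
      define Lv where "Lv = ln Y / 2"
      have DX: "((\<lambda>y. Lf (vp y) (vm y) v) has_real_derivative Lx) (at x)"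
        using Lf_deriv[OF dvp[OF xU] dvm[OF xU] DERIV_const[of v "at x"] ap] unfolding Lx_def Y_def by simp
      have DV: "((\<lambda>w. Lf (vp x) (vm x) w) has_real_derivative Lv) (at v)"
        using Lf_deriv[OF DERIV_const[of "vp x" "at v"] DERIV_const[of "vm x" "at v"] DERIV_ident ap] unfolding Lv_def Y_def by simp
      have "Lag_dx (\<lambda>x p. vp x * (exp (2 * p) - 1) + vm x * (exp (- 2 * p) - 1)) x v Lx"
        unfolding Lag_dx_def
      proof (intro conjI)
        show "Lag (\<lambda>x p. vp x * (exp (2 * p) - 1) + vm x * (exp (- 2 * p) - 1)) x v < \<infinity>"
          unfolding LagH[OF xin] by simp
        show "\<forall>\<^sub>F y in at x within {- 1..1}. Lag (\<lambda>x p. vp x * (exp (2 * p) - 1) + vm x * (exp (- 2 * p) - 1)) y v < \<infinity>"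
          unfolding eventually_at_topological
          by (rule exI[of _ "{-1<..<1}"]) (use xin LagH in auto)
        have "((\<lambda>y. real_of_ereal (Lag (\<lambda>x p. vp x * (exp (2 * p) - 1) + vm x * (exp (- 2 * p) - 1)) y v)) has_real_derivative Lx) (at x)"
          by (rule has_field_derivative_transform_within_open[OF DX open_greaterThanLessThan xin])
             (subst LagH; auto)
        thus "((\<lambda>y. real_of_ereal (Lag (\<lambda>x p. vp x * (exp (2 * p) - 1) + vm x * (exp (- 2 * p) - 1)) y v)) has_real_derivative Lx) (at x within {-1..1})"
          by (rule has_field_derivative_at_within)
      qed
      moreover have "Lag_dv (\<lambda>x p. vp x * (exp (2 * p) - 1) + vm x * (exp (- 2 * p) - 1)) x v Lv"
        unfolding Lag_dv_def
      proof (intro conjI)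
        show "Lag (\<lambda>x p. vp x * (exp (2 * p) - 1) + vm x * (exp (- 2 * p) - 1)) x v < \<infinity>"
          unfolding LagH[OF xin] by simp
        show "\<forall>\<^sub>F w in at v. Lag (\<lambda>x p. vp x * (exp (2 * p) - 1) + vm x * (exp (- 2 * p) - 1)) x w < \<infinity>"
          unfolding LagH[OF xin] by simp
        have e: "(\<lambda>w. real_of_ereal (Lag (\<lambda>x p. vp x * (exp (2 * p) - 1) + vm x * (exp (- 2 * p) - 1)) x w)) = (\<lambda>w. Lf (vp x) (vm x) w)"
          unfolding LagH[OF xin] by simp
        show "((\<lambda>w. real_of_ereal (Lag (\<lambda>x p. vp x * (exp (2 * p) - 1) + vm x * (exp (- 2 * p) - 1)) x w)) has_real_derivative Lv) (at v)"
          unfolding e by (rule DV)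
      qed
      moreover have "\<bar>Lx\<bar> + \<bar>Lv\<bar> \<le> (4 * K0) * th0 \<bar>v\<bar>"
      proof -
        have "\<bar>Lx\<bar> + \<bar>Lv\<bar> \<le> K0 * (1 + \<bar>v\<bar>)"
          unfolding Lx_def Lv_def Y_def K0_def by (rule Lbound[OF dM(1) bx])
        also have "\<dots> \<le> K0 * (4 * th0 \<bar>v\<bar>)" using th0_ge[of "\<bar>v\<bar>"] K00 by (intro mult_left_mono) auto
        finally show ?thesis by (simp add: algebra_simps)
      qed
      ultimately show "\<exists>Lx Lv. Lag_dx (\<lambda>x p. vp x * (exp (2 * p) - 1) + vm x * (exp (- 2 * p) - 1)) x v Lx \<and>
                     Lag_dv (\<lambda>x p. vp x * (exp (2 * p) - 1) + vm x * (exp (- 2 * p) - 1)) x v Lv \<and>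
                     \<bar>Lx\<bar> + \<bar>Lv\<bar> \<le> (4 * K0) * th0 \<bar>v\<bar>" by blast
    qed
  qed
qed

end

theorem lemmaA1:
  fixes vp vm :: "real \<Rightarrow> real"
  assumes nonneg: "\<forall>x\<in>{-1..1}. vp x \<ge> 0 \<and> vm x \<ge> 0"
    and vm_zero: "vm (-1) = 0" and vm_pos: "\<forall>x\<in>{-1..1}. x \<noteq> -1 \<longrightarrow> vm x > 0"
    and vp_zero: "vp 1 = 0" and vp_pos: "\<forall>x\<in>{-1..1}. x \<noteq> 1 \<longrightarrow> vp x > 0"
    and smooth: "\<exists>U. open U \<and> {-1..1} \<subseteq> U \<and> C2_1 vp U \<and> C2_1 vm U"
    and vp_deriv: "deriv vp 1 < 0" and vm_deriv: "deriv vm (-1) > 0"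
  shows "condH (\<lambda>x p. vp x * (exp (2 * p) - 1) + vm x * (exp (- 2 * p) - 1))"
proof -
  obtain U where U: "open U" "{-1..1} \<subseteq> U" and c1: "C2_1 vp U" and c2: "C2_1 vm U"
    using smooth by blast
  obtain f1 f2 where f: "\<forall>x\<in>U. (vp has_real_derivative f1 x) (at x) \<and> (f1 has_real_derivative f2 x) (at x)"
    and cf2: "continuous_on U f2"
    using c1 unfolding C2_1_def by blast
  obtain g1 g2 where g: "\<forall>x\<in>U. (vm has_real_derivative g1 x) (at x) \<and> (g1 has_real_derivative g2 x) (at x)"
    and cg2: "continuous_on U g2"
    using c2 unfolding C2_1_def by blast
  have p1: "1 \<in> U" and m1: "-1 \<in> U" using U by auto
  have "deriv vp 1 = f1 1" using f p1 by (intro DERIV_imp_deriv) blast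
  hence f11: "f1 1 < 0" using vp_deriv by simp
  have "deriv vm (-1) = g1 (-1)" using g m1 by (intro DERIV_imp_deriv) blast
  hence g11: "g1 (-1) > 0" using vm_deriv by simp
  interpret LA vp vm f1 f2 g1 g2 U
  proof
    show "open U" "{-1..1} \<subseteq> U" using U by auto
    show "\<And>x. x \<in> U \<Longrightarrow> (vp has_real_derivative f1 x) (at x)" using f by blast
    show "\<And>x. x \<in> U \<Longrightarrow> (f1 has_real_derivative f2 x) (at x)" using f by blast
    show "continuous_on U f2" by (rule cf2)
    show "\<And>x. x \<in> U \<Longrightarrow> (vm has_real_derivative g1 x) (at x)" using g by blast
    show "\<And>x. x \<in> U \<Longrightarrow> (g1 has_real_derivative g2 x) (at x)" using g by blast
    show "continuous_on U g2" by (rule cg2)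
    show "vm (-1) = 0" "vp 1 = 0" by (rule vm_zero, rule vp_zero)
    show "\<And>x. x \<in> {-1<..<1} \<Longrightarrow> vp x > 0 \<and> vm x > 0" using vp_pos vm_pos by auto
    show "vp (-1) > 0" using vp_pos by auto
    show "vm 1 > 0" using vm_pos by auto
    show "f1 1 < 0" by (rule f11)
    show "g1 (-1) > 0" by (rule g11)
  qed
  show ?thesis unfolding condH_def using H0 H1 H2 H3 H4 H5 by blast
qed

end
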